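(* Let $\sigma$ be the standard surface measure on the unit sphere $\mathbb S^n\subset\mathbb R^{n+1}$. Let $H\subset\mathbb S^n$ be an open hemisphere with center $o$, let $B\subset\mathbb S^n$ be a spherical (geodesic) ball of radius at most $\pi/2$ centered at $o$, and let $T\subseteq H$ be a measurable set star-shaped with respect to $o$ (for every $x\in T$ the shortest great-circle arc from $o$ to $x$ lies in $T$). Then \[ \sigma(B\cap T)\,\sigma(H)\ge\sigma(B)\,\sigma(T). \] *)

theory Defs
  imports "HOL-Analysis.Analysis"
begin

definition sphere_cone :: "'a::euclidean_space set \<Rightarrow> 'a set" where
  "sphere_cone A = {t *\<^sub>R x | t x. 0 < t \<and> t \<le> 1 \<and> x \<in> A}"

text \<open>Standard surface measure on the unit sphere of a Euclidean space of dimension d: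
  sigma(A) = d * Lebesgue measure of the cone over A (the cone-measure formula).\<close>
definition sphere_measurable :: "'a::euclidean_space set \<Rightarrow> bool" where
  "sphere_measurable A \<longleftrightarrow> A \<subseteq> sphere 0 1 \<and> sphere_cone A \<in> sets lebesgue"

definition surf_measure :: "'a::euclidean_space set \<Rightarrow> real" where
  "surf_measure A = real DIM('a) * measure lebesgue (sphere_cone A)"

definition open_hemisphere :: "'a::euclidean_space \<Rightarrow> 'a set" where
  "open_hemisphere c = {x \<in> sphere 0 1. x \<bullet> c > 0}"

definition sph_ball :: "'a::euclidean_space \<Rightarrow> real \<Rightarrow> 'a set" where
  "sph_ball c r = {x \<in> sphere 0 1. arccos (x \<bullet> c) < r}"

text \<open>Star-shaped w.r.t. c on the sphere: the shortest great-circle arc from c to any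
  x in T lies in T (for x not antipodal to c it is the normalized segment).\<close>
definition sph_star_shaped :: "'a::euclidean_space \<Rightarrow> 'a set \<Rightarrow> bool" where
  "sph_star_shaped c T \<longleftrightarrow>
     (\<forall>x\<in>T. \<forall>t\<in>{0..1::real}.
        (1 / norm ((1 - t) *\<^sub>R c + t *\<^sub>R x)) *\<^sub>R ((1 - t) *\<^sub>R c + t *\<^sub>R x) \<in> T)"

end

theory Submission
  imports Defs
begin


typedef (overloaded) ('a::euclidean_space) bix = "Basis :: 'a set"
  using nonempty_Basis by blast

instance bix :: (euclidean_space) finite
proof
  have "(UNIV :: 'a bix set) = Abs_bix ` Basis"
    using type_definition.Abs_image[OF type_definition_bix] by (rule sym)
  then show "finite (UNIV :: 'a bix set)" by (metis finite_Basis finite_imageI)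
qed

instantiation bix :: (euclidean_space) linorder
begin
definition less_eq_bix :: "'a bix \<Rightarrow> 'a bix \<Rightarrow> bool" where
  "less_eq_bix x y \<longleftrightarrow> to_nat x \<le> to_nat y"
definition less_bix :: "'a bix \<Rightarrow> 'a bix \<Rightarrow> bool" where
  "less_bix x y \<longleftrightarrow> to_nat x < to_nat y"
instance
  by standard (auto simp: less_eq_bix_def less_bix_def)
end

instance bix :: (euclidean_space) wellorder
proof
  fix P :: "'a bix \<Rightarrow> bool" and a
  assume H: "\<And>x. (\<And>y. y < x \<Longrightarrow> P y) \<Longrightarrow> P x"
  have "\<forall>x. to_nat x = n \<longrightarrow> P x" for n
  proof (induction n rule: less_induct)
    case (less n)
    then show ?case using H by (auto simp: less_bix_def)
  qed
  then show "P a" by blast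
qed


lemma bij_Rep_bix: "bij_betw Rep_bix (UNIV :: 'a::euclidean_space bix set) Basis"
  unfolding bij_betw_def inj_on_def
  using Rep_bix Rep_bix_inject type_definition.Rep_range[OF type_definition_bix] by auto

lemma card_bix: "CARD('a::euclidean_space bix) = DIM('a)"
  using bij_Rep_bix bij_betw_same_card by blast

definition phi :: "'a::euclidean_space \<Rightarrow> real^('a bix)" where
  "phi x = (\<chi> i. x \<bullet> Rep_bix i)"

definition psi :: "real^('a::euclidean_space bix) \<Rightarrow> 'a" where
  "psi v = (\<Sum>i\<in>UNIV. (v $ i) *\<^sub>R Rep_bix i)"

lemma sum_bix: "(\<Sum>i\<in>UNIV. f (Rep_bix i)) = (\<Sum>b\<in>(Basis::'a::euclidean_space set). f b)"
  using sum.reindex_bij_betw[OF bij_Rep_bix] by blast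

lemma prod_bix: "(\<Prod>i\<in>UNIV. f (Rep_bix i)) = (\<Prod>b\<in>(Basis::'a::euclidean_space set). f b)"
  using prod.reindex_bij_betw[OF bij_Rep_bix] by blast

lemma psi_phi: "psi (phi x) = x"
  unfolding psi_def phi_def using sum_bix[of "\<lambda>b. (x \<bullet> b) *\<^sub>R b"]
  by (simp add: euclidean_representation)

lemma inner_Rep_bix: "Rep_bix i \<bullet> Rep_bix j = (if i = j then 1 else 0)"
  using Rep_bix[of i] Rep_bix[of j] Rep_bix_inject[of i j] by (auto simp: inner_Basis)

lemma psi_inner: "psi v \<bullet> Rep_bix j = v $ j"
proof -
  have "psi v \<bullet> Rep_bix j = (\<Sum>i\<in>UNIV. v $ i * (Rep_bix i \<bullet> Rep_bix j))"
    unfolding psi_def by (simp add: inner_sum_left)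
  also have "\<dots> = (\<Sum>i\<in>UNIV. if i = j then v $ i else 0)"
    by (intro sum.cong) (auto simp: inner_Rep_bix)
  also have "\<dots> = v $ j" by simp
  finally show ?thesis .
qed

lemma psi_inner_Basis: "b \<in> Basis \<Longrightarrow> psi v \<bullet> b = v $ Abs_bix b"
  by (metis Abs_bix_inverse psi_inner)

lemma phi_psi: "phi (psi v) = v"
  unfolding phi_def by (simp add: psi_inner vec_eq_iff)

lemma linear_phi: "linear phi"
  unfolding phi_def by (rule linearI) (simp_all add: vec_eq_iff inner_add_left)

lemma linear_psi: "linear psi"
  unfolding psi_def by (rule linearI) (simp_all add: scaleR_add_left sum.distrib scaleR_sum_right)

lemma phi_inner: "phi x \<bullet> phi y = x \<bullet> y"
proof -
  have "phi x \<bullet> phi y = (\<Sum>i\<in>UNIV. (x \<bullet> Rep_bix i) * (y \<bullet> Rep_bix i))"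
    unfolding phi_def inner_vec_def by simp
  also have "\<dots> = x \<bullet> y" using sum_bix[of "\<lambda>b. (x \<bullet> b) * (y \<bullet> b)"]
    by (metis euclidean_inner)
  finally show ?thesis .
qed


lemma Basis_vec_real: "(Basis :: (real^'n) set) = range (\<lambda>i. axis i 1)"
  unfolding Basis_vec_def by auto

lemma prod_Basis_vec: "(\<Prod>b\<in>(Basis::(real^'n) set). f b) = (\<Prod>i\<in>UNIV. f (axis i 1))"
proof -
  have "inj (\<lambda>i::'n. axis i (1::real))" by (auto simp: inj_on_def axis_eq_axis)
  then show ?thesis unfolding Basis_vec_real by (simp add: prod.reindex)
qed

lemma continuous_phi: "continuous_on UNIV phi"
  using linear_phi linear_conv_bounded_linear linear_continuous_on by blast

lemma continuous_psi: "continuous_on UNIV psi"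
  using linear_psi linear_conv_bounded_linear linear_continuous_on by blast

lemma phi_measurable[measurable]: "phi \<in> borel_measurable borel"
  using continuous_phi by (rule borel_measurable_continuous_onI)

lemma psi_measurable[measurable]: "psi \<in> borel_measurable borel"
  using continuous_psi by (rule borel_measurable_continuous_onI)

lemma phi_nth: "phi x $ i = x \<bullet> Rep_bix i"
  by (simp add: phi_def)

lemma lborel_phi: "lborel = distr (lborel :: 'a::euclidean_space measure) borel phi"
proof (rule lborel_eqI)
  fix l u :: "real^('a bix)"
  assume le: "\<And>b. b \<in> Basis \<Longrightarrow> l \<bullet> b \<le> u \<bullet> b"
  have le': "l $ i \<le> u $ i" for i using le[of "axis i 1"] by (simp add: inner_axis)
  have eq: "phi -` box l u = box (psi l) (psi u)"
  proof -
    have "x \<in> box (psi l) (psi u) \<longleftrightarrow> (\<forall>i. l $ i < x \<bullet> Rep_bix i \<and> x \<bullet> Rep_bix i < u $ i)" for x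
    proof -
      have "x \<in> box (psi l) (psi u) \<longleftrightarrow> (\<forall>b\<in>Basis. psi l \<bullet> b < x \<bullet> b \<and> x \<bullet> b < psi u \<bullet> b)"
        by (simp add: mem_box)
      also have "\<dots> \<longleftrightarrow> (\<forall>i. psi l \<bullet> Rep_bix i < x \<bullet> Rep_bix i \<and> x \<bullet> Rep_bix i < psi u \<bullet> Rep_bix i)"
        using bij_Rep_bix by (metis (no_types, lifting) Rep_bix type_definition.Rep_range[OF type_definition_bix] imageE)
      finally show ?thesis by (simp add: psi_inner)
    qed
    moreover have "phi x \<in> box l u \<longleftrightarrow> (\<forall>i. l $ i < x \<bullet> Rep_bix i \<and> x \<bullet> Rep_bix i < u $ i)" for x
      by (simp add: mem_box Basis_vec_real inner_axis phi_nth)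
    ultimately show ?thesis by auto
  qed
  have "emeasure (distr lborel borel phi) (box l u) = emeasure lborel (box (psi l) (psi u))"
    by (subst emeasure_distr) (auto simp: eq)
  also have "\<dots> = (\<Prod>b\<in>Basis. (psi u - psi l) \<bullet> b)"
    using le' by (subst emeasure_lborel_box_eq) (auto simp: inner_diff_left psi_inner_Basis)
  also have "\<dots> = (\<Prod>i\<in>UNIV. (psi u - psi l) \<bullet> Rep_bix i)"
    using prod_bix[of "\<lambda>b. (psi u - psi l) \<bullet> b"] by simp
  also have "\<dots> = (\<Prod>b\<in>Basis. (u - l) \<bullet> b)"
    by (simp add: prod_Basis_vec inner_diff_left psi_inner inner_axis)
  finally show "emeasure (distr lborel borel phi) (box l u) = (\<Prod>b\<in>Basis. (u - l) \<bullet> b)" .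
qed simp


lemma lborel_psi: "lborel = distr (lborel :: (real^('a::euclidean_space bix)) measure) borel psi"
proof (rule lborel_eqI)
  fix l u :: "'a"
  assume le: "\<And>b. b \<in> Basis \<Longrightarrow> l \<bullet> b \<le> u \<bullet> b"
  have eq: "psi -` box l u = box (phi l) (phi u)"
  proof -
    have "psi v \<in> box l u \<longleftrightarrow> (\<forall>i. l \<bullet> Rep_bix i < v $ i \<and> v $ i < u \<bullet> Rep_bix i)" for v
    proof -
      have "psi v \<in> box l u \<longleftrightarrow> (\<forall>b\<in>Basis. l \<bullet> b < psi v \<bullet> b \<and> psi v \<bullet> b < u \<bullet> b)"
        by (simp add: mem_box)
      also have "\<dots> \<longleftrightarrow> (\<forall>i. l \<bullet> Rep_bix i < psi v \<bullet> Rep_bix i \<and> psi v \<bullet> Rep_bix i < u \<bullet> Rep_bix i)"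
        by (metis (no_types, lifting) Rep_bix type_definition.Rep_range[OF type_definition_bix] imageE)
      finally show ?thesis by (simp add: psi_inner)
    qed
    moreover have "v \<in> box (phi l) (phi u) \<longleftrightarrow> (\<forall>i. l \<bullet> Rep_bix i < v $ i \<and> v $ i < u \<bullet> Rep_bix i)" for v
      by (simp add: mem_box Basis_vec_real inner_axis phi_nth)
    ultimately show ?thesis by auto
  qed
  have le': "l \<bullet> Rep_bix i \<le> u \<bullet> Rep_bix i" for i using le Rep_bix by blast
  have "emeasure (distr lborel borel psi) (box l u) = emeasure lborel (box (phi l) (phi u))"
    by (subst emeasure_distr) (auto simp: eq)
  also have "\<dots> = (\<Prod>b\<in>Basis. (phi u - phi l) \<bullet> b)"
    using le' by (subst emeasure_lborel_box_eq) (auto simp: inner_diff_left Basis_vec_real inner_axis phi_nth)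
  also have "\<dots> = (\<Prod>i\<in>UNIV. (u - l) \<bullet> Rep_bix i)"
    by (simp add: prod_Basis_vec inner_diff_left inner_axis phi_nth)
  also have "\<dots> = (\<Prod>b\<in>Basis. (u - l) \<bullet> b)"
    using prod_bix[of "\<lambda>b. (u - l) \<bullet> b"] by simp
  finally show "emeasure (distr lborel borel psi) (box l u) = (\<Prod>b\<in>Basis. (u - l) \<bullet> b)" .
qed simp

lemma lebesgue_transfer:
  fixes X :: "'a::euclidean_space \<Rightarrow> 'b::euclidean_space"
  assumes Xm: "X \<in> borel_measurable borel" and lb: "lborel = distr (lborel::'a measure) borel X"
  shows "lebesgue = distr (lebesgue::'a measure) lebesgue X"
    and "X \<in> (lebesgue::'a measure) \<rightarrow>\<^sub>M lebesgue"
proof -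
  have d1: "distr (lebesgue::'a measure) lborel X = lborel"
  proof -
    have "distr (lebesgue::'a measure) lborel X = distr lborel lborel X"
      by (rule distr_completion) (use Xm in simp)
    also have "\<dots> = distr lborel borel X"
      by (rule distr_cong) auto
    finally show ?thesis using lb by simp
  qed
  have Xc: "X \<in> (lebesgue::'a measure) \<rightarrow>\<^sub>M lborel"
    using Xm by (simp add: measurable_completion)
  have "completion (distr (lebesgue::'a measure) lborel X) = distr lebesgue (completion lborel) X"
    by (rule completion.completion_distr_eq[OF Xc]) (simp add: d1)
  then show "lebesgue = distr (lebesgue::'a measure) lebesgue X" using d1 by simp
  show "X \<in> (lebesgue::'a measure) \<rightarrow>\<^sub>M lebesgue"
    by (rule completion.measurable_completion2[OF Xc]) (simp add: d1)
qed

lemmas lebesgue_phi = lebesgue_transfer[OF phi_measurable lborel_phi]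

lemmas lebesgue_psi = lebesgue_transfer[OF psi_measurable lborel_psi]

lemma psi_image_vimage: "psi ` F = phi -` F"
  by (auto simp: phi_psi psi_phi) (metis psi_phi image_eqI)

lemma phi_image_vimage: "phi ` E = psi -` E"
  by (auto simp: phi_psi psi_phi) (metis phi_psi image_eqI)

lemma psi_image_lebesgue:
  assumes "F \<in> sets lebesgue"
  shows "psi ` F \<in> sets lebesgue" "emeasure lebesgue (psi ` F) = emeasure lebesgue F"
proof -
  have m: "phi \<in> (lebesgue::'a measure) \<rightarrow>\<^sub>M (lebesgue :: (real^('a::euclidean_space bix)) measure)"
    by (rule lebesgue_phi(2))
  show "psi ` F \<in> sets lebesgue"
    using measurable_sets[OF m assms] by (simp add: psi_image_vimage)
  show "emeasure lebesgue (psi ` F) = emeasure lebesgue F"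
  proof -
    have "emeasure lebesgue F = emeasure (distr (lebesgue::'a measure) lebesgue phi) F"
      using lebesgue_phi(1) by metis
    also have "\<dots> = emeasure lebesgue (psi ` F)"
      using emeasure_distr[OF m assms] by (simp add: psi_image_vimage)
    finally show ?thesis by simp
  qed
qed

lemma phi_image_lebesgue:
  assumes "E \<in> sets lebesgue"
  shows "phi ` E \<in> sets lebesgue" "emeasure lebesgue (phi ` E) = emeasure lebesgue (E :: 'a::euclidean_space set)"
proof -
  have m: "psi \<in> (lebesgue :: (real^('a::euclidean_space bix)) measure) \<rightarrow>\<^sub>M (lebesgue::'a measure)"
    by (rule lebesgue_psi(2))
  show "phi ` E \<in> sets lebesgue"
    using measurable_sets[OF m assms] by (simp add: phi_image_vimage)
  show "emeasure lebesgue (phi ` E) = emeasure lebesgue E"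
  proof -
    have "emeasure lebesgue E = emeasure (distr (lebesgue::(real^('a bix)) measure) lebesgue psi) E"
      using lebesgue_psi(1) by metis
    also have "\<dots> = emeasure lebesgue (phi ` E)"
      using emeasure_distr[OF m assms] by (simp add: phi_image_vimage)
    finally show ?thesis by simp
  qed
qed



definition stretch :: "'a::real_inner \<Rightarrow> real \<Rightarrow> 'a \<Rightarrow> 'a" where
  "stretch c l y = l *\<^sub>R y + ((1 - l) * (y \<bullet> c)) *\<^sub>R c"

lemma linear_stretch: "linear (stretch c l)"
  unfolding stretch_def by (rule linearI) (auto simp: algebra_simps inner_add_left)

lemma stretch_vec:
  fixes c :: "real^'n::{finite,wellorder}"
  assumes c: "norm c = 1" and l: "l > 0" and S: "S \<in> lmeasurable"
  shows "stretch c l ` S \<in> lmeasurable"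
    "measure lebesgue (stretch c l ` S) = l ^ (CARD('n) - 1) * measure lebesgue S"
proof -
  fix k :: 'n
  have nc: "norm c = norm (axis k (1::real))" using c by simp
  obtain g where g: "orthogonal_transformation g" "g c = axis k (1::real)"
    using orthogonal_transformation_exists[OF nc] by blast
  define g' where "g' = inv g"
  have g': "orthogonal_transformation g'" unfolding g'_def by (rule orthogonal_transformation_inv[OF g(1)])
  have gg: "g' (g y) = y" for y unfolding g'_def by (rule inv_f_f[OF orthogonal_transformation_inj[OF g(1)]])
  have g'k: "g' (axis k 1) = c" using gg[of c] g(2) by simp
  define D where "D = (\<lambda>z. l *\<^sub>R z + ((1 - l) * z $ k) *\<^sub>R axis k (1::real))"
  have linD: "linear D" unfolding D_def by (rule linearI) (auto simp: algebra_simps)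
  have gk: "g y $ k = y \<bullet> c" for y
    using g unfolding orthogonal_transformation_def by (metis cart_eq_inner_axis)
  have eqf: "stretch c l y = g' (D (g y))" for y
  proof -
    have "g' (D (g y)) = l *\<^sub>R g' (g y) + ((1 - l) * g y $ k) *\<^sub>R g' (axis k 1)"
      unfolding D_def using orthogonal_transformation_linear[OF g']
      by (simp add: linear_add linear_scale)
    then show ?thesis by (simp add: gg g'k gk stretch_def)
  qed
  have img: "stretch c l ` S = g' ` (D ` (g ` S))"
    unfolding image_image by (simp add: eqf)
  have m1: "g ` S \<in> lmeasurable" "measure lebesgue (g ` S) = measure lebesgue S"
    using measurable_orthogonal_image[OF g(1) S] measure_orthogonal_image[OF g(1) S] by auto
  have m2: "D ` (g ` S) \<in> lmeasurable" "measure lebesgue (D ` (g ` S)) = \<bar>det (matrix D)\<bar> * measure lebesgue (g ` S)"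
    using measurable_linear_image[OF linD m1(1)] measure_linear_image[OF linD m1(1)] by auto
  have m3: "g' ` (D ` (g ` S)) \<in> lmeasurable" "measure lebesgue (g' ` (D ` (g ` S))) = measure lebesgue (D ` (g ` S))"
    using measurable_orthogonal_image[OF g' m2(1)] measure_orthogonal_image[OF g' m2(1)] by auto
  have detD: "det (matrix D) = l ^ (CARD('n) - 1)"
  proof -
    have md: "matrix D $ i $ j = (if i = j then (if i = k then 1 else l) else 0)" for i j
      by (auto simp: matrix_def D_def axis_def)
    then have "det (matrix D) = prod (\<lambda>i. matrix D $ i $ i) UNIV"
      by (intro det_diagonal) simp
    also have "\<dots> = prod (\<lambda>i. if i = k then 1 else l) UNIV"
      by (simp add: md)
    also have "\<dots> = prod (\<lambda>i. l) (UNIV - {k})"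
    proof -
      have "prod (\<lambda>i. if i = k then 1 else l) UNIV = (if k = k then 1 else l) * prod (\<lambda>i. if i = k then 1 else l) (UNIV - {k})"
        by (rule prod.remove) auto
      also have "prod (\<lambda>i. if i = k then 1 else l) (UNIV - {k}) = prod (\<lambda>i. l) (UNIV - {k})"
        by (rule prod.cong) auto
      finally show ?thesis by simp
    qed
    also have "\<dots> = l ^ (CARD('n) - 1)"
      by (simp add: card_Diff_singleton)
    finally show ?thesis .
  qed
  show "stretch c l ` S \<in> lmeasurable" using img m3 by simp
  show "measure lebesgue (stretch c l ` S) = l ^ (CARD('n) - 1) * measure lebesgue S"
    using img m1 m2 m3 detD l by simp
qed


lemma phi_lm:
  assumes "S \<in> lmeasurable"
  shows "phi ` S \<in> lmeasurable" "measure lebesgue (phi ` S) = measure lebesgue (S::'a::euclidean_space set)"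
  using phi_image_lebesgue[of S] assms by (auto simp: fmeasurable_def measure_def)

lemma psi_lm:
  assumes "S \<in> lmeasurable"
  shows "psi ` S \<in> lmeasurable" "measure lebesgue (psi ` S) = measure lebesgue (S::(real^('a::euclidean_space bix)) set)"
  using psi_image_lebesgue[of S] assms by (auto simp: fmeasurable_def measure_def)

lemma norm_phi: "norm (phi x) = norm x"
  by (simp add: norm_eq_sqrt_inner phi_inner)

lemma phi_stretch: "phi (stretch c l y) = stretch (phi c) l (phi y)"
  unfolding stretch_def by (simp add: linear_add[OF linear_phi] linear_scale[OF linear_phi] phi_inner)

theorem stretch_measure:
  fixes c :: "'a::euclidean_space"
  assumes c: "norm c = 1" and l: "l > 0" and S: "S \<in> lmeasurable"
  shows "stretch c l ` S \<in> lmeasurable"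
    "measure lebesgue (stretch c l ` S) = l ^ (DIM('a) - 1) * measure lebesgue S"
proof -
  have img: "stretch c l ` S = psi ` (stretch (phi c) l ` (phi ` S))"
  proof -
    have "stretch c l y = psi (stretch (phi c) l (phi y))" for y
      by (metis phi_stretch psi_phi)
    then show ?thesis unfolding image_image by simp
  qed
  have nc: "norm (phi c) = 1" using c by (simp add: norm_phi)
  note p1 = phi_lm[OF S]
  note p2 = stretch_vec[OF nc l p1(1)]
  note p3 = psi_lm[OF p2(1)]
  show "stretch c l ` S \<in> lmeasurable" using img p3 by simp
  show "measure lebesgue (stretch c l ` S) = l ^ (DIM('a) - 1) * measure lebesgue S"
    using img p1 p2 p3 by (simp add: card_bix)
qed



definition dir :: "'a::real_normed_vector \<Rightarrow> 'a" where "dir y = (1 / norm y) *\<^sub>R y"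
definition cn :: "'a::real_normed_vector set \<Rightarrow> 'a set" where "cn A = {y. y \<noteq> 0 \<and> dir y \<in> A}"
definition wv :: "'a::real_inner \<Rightarrow> 'a \<Rightarrow> 'a" where "wv c y = y - (y \<bullet> c) *\<^sub>R c"
definition pyr :: "'a::real_inner \<Rightarrow> 'a set \<Rightarrow> real \<Rightarrow> 'a set" where
  "pyr c A \<rho> = {y \<in> cn A. y \<bullet> c \<le> 1 \<and> norm (wv c y) < \<rho> * (y \<bullet> c)}"
definition strip :: "'a::real_inner \<Rightarrow> real \<Rightarrow> real \<Rightarrow> 'a set" where
  "strip c a b = {y. a < y \<bullet> c \<and> y \<bullet> c \<le> b}"

lemma dir_scale: "k > 0 \<Longrightarrow> dir (k *\<^sub>R y) = dir y"
  by (simp add: dir_def)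

lemma norm_dir: "y \<noteq> 0 \<Longrightarrow> norm (dir y) = 1"
  by (simp add: dir_def)

lemma dir_sphere: "norm x = 1 \<Longrightarrow> dir x = x"
  by (simp add: dir_def)

lemma dir_decomp: "y = norm y *\<^sub>R dir y"
  by (cases "y = 0") (auto simp: dir_def)

lemma sphere_cone_eq:
  assumes "A \<subseteq> sphere 0 1"
  shows "sphere_cone A = cn A \<inter> cball 0 1"
proof
  show "sphere_cone A \<subseteq> cn A \<inter> cball 0 1"
  proof
    fix y assume "y \<in> sphere_cone A"
    then obtain t x where y: "y = t *\<^sub>R x" "0 < t" "t \<le> 1" "x \<in> A" by (auto simp: sphere_cone_def)
    have nx: "norm x = 1" using assms y(4) by auto
    show "y \<in> cn A \<inter> cball 0 1"
      using y nx by (auto simp: cn_def dir_scale dir_sphere)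
  qed
  show "cn A \<inter> cball 0 1 \<subseteq> sphere_cone A"
  proof
    fix y assume "y \<in> cn A \<inter> cball 0 1"
    then have y: "y \<noteq> 0" "dir y \<in> A" "norm y \<le> 1" by (auto simp: cn_def)
    then show "y \<in> sphere_cone A"
      unfolding sphere_cone_def using dir_decomp[of y] by (intro CollectI exI[of _ "norm y"] exI[of _ "dir y"]) auto
  qed
qed

lemma cn_scale: "k > 0 \<Longrightarrow> k *\<^sub>R y \<in> cn A \<longleftrightarrow> y \<in> cn A"
  by (simp add: cn_def dir_scale)

lemma scale_cn_cball:
  assumes "M > 0"
  shows "(\<lambda>y. M *\<^sub>R y) ` (cn A \<inter> cball 0 1) = cn A \<inter> cball 0 M"
proof
  show "(\<lambda>y. M *\<^sub>R y) ` (cn A \<inter> cball 0 1) \<subseteq> cn A \<inter> cball 0 M"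
    using assms by (auto simp: cn_scale)
  show "cn A \<inter> cball 0 M \<subseteq> (\<lambda>y. M *\<^sub>R y) ` (cn A \<inter> cball 0 1)"
  proof
    fix z assume z: "z \<in> cn A \<inter> cball 0 M"
    have "(1/M) *\<^sub>R z \<in> cn A \<inter> cball 0 1"
      using z assms by (auto simp: cn_scale)
    moreover have "z = M *\<^sub>R ((1/M) *\<^sub>R z)" using assms by simp
    ultimately show "z \<in> (\<lambda>y. M *\<^sub>R y) ` (cn A \<inter> cball 0 1)" by blast
  qed
qed

lemma scale_image_lebesgue:
  assumes "E \<in> sets lebesgue" "M \<noteq> 0"
  shows "(\<lambda>y. M *\<^sub>R y) ` E \<in> sets (lebesgue :: 'a::euclidean_space measure)"
proof -
  have "(\<lambda>y. M *\<^sub>R y) ` E = (\<lambda>y. (1/M) *\<^sub>R y) -` E \<inter> space lebesgue"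
  proof
    show "(\<lambda>y. M *\<^sub>R y) ` E \<subseteq> (\<lambda>y. (1/M) *\<^sub>R y) -` E \<inter> space lebesgue"
      using assms(2) by auto
    show "(\<lambda>y. (1/M) *\<^sub>R y) -` E \<inter> space lebesgue \<subseteq> (\<lambda>y. M *\<^sub>R y) ` E"
    proof
      fix x assume "x \<in> (\<lambda>y. (1/M) *\<^sub>R y) -` E \<inter> space lebesgue"
      then have "(1/M) *\<^sub>R x \<in> E" by simp
      moreover have "x = M *\<^sub>R ((1/M) *\<^sub>R x)" using assms(2) by simp
      ultimately show "x \<in> (\<lambda>y. M *\<^sub>R y) ` E" by blast
    qed
  qed
  also have "\<dots> \<in> sets lebesgue"
    by (rule measurable_sets[OF lebesgue_measurable_scaling assms(1)])
  finally show ?thesis .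
qed

lemma cn_cball_lebesgue:
  assumes "A \<subseteq> sphere 0 1" "sphere_cone A \<in> sets lebesgue" "M > 0"
  shows "cn A \<inter> cball 0 M \<in> sets (lebesgue :: 'a::euclidean_space measure)"
proof -
  have "cn A \<inter> cball 0 M = (\<lambda>y. M *\<^sub>R y) ` sphere_cone A"
    using scale_cn_cball[OF assms(3), of A] sphere_cone_eq[OF assms(1)] by simp
  then show ?thesis using scale_image_lebesgue[OF assms(2)] assms(3) by simp
qed

lemma norm_wv_sq:
  assumes "norm c = 1"
  shows "(norm (wv c y))\<^sup>2 = (norm y)\<^sup>2 - (y \<bullet> c)\<^sup>2"
proof -
  have cc: "c \<bullet> c = 1" using assms by (simp add: norm_eq_1)
  show ?thesis
    unfolding wv_def power2_norm_eq_inner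
    by (simp add: inner_diff_left inner_diff_right cc inner_commute power2_eq_square)
qed

lemma norm_le_wv:
  assumes "norm c = 1"
  shows "norm y \<le> \<bar>y \<bullet> c\<bar> + norm (wv c y)"
proof -
  have "y = (y \<bullet> c) *\<^sub>R c + wv c y" by (simp add: wv_def)
  then have "norm y \<le> norm ((y \<bullet> c) *\<^sub>R c) + norm (wv c y)"
    by (metis norm_triangle_ineq)
  then show ?thesis using assms by simp
qed

lemma borel_pyr_cond:
  "{y::'a::euclidean_space. y \<bullet> c \<le> 1 \<and> norm (wv c y) < \<rho> * (y \<bullet> c)} \<in> sets borel"
proof -
  have "{y::'a. y \<bullet> c \<le> 1 \<and> norm (wv c y) < \<rho> * (y \<bullet> c)} = {y. y \<bullet> c \<le> 1} \<inter> {y. norm (wv c y) < \<rho> * (y \<bullet> c)}"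
    by auto
  moreover have cl: "closed {y::'a. y \<bullet> c \<le> 1}"
    using closed_halfspace_le[of c 1] by (simp add: inner_commute)
  moreover have op: "open {y::'a. norm (wv c y) < \<rho> * (y \<bullet> c)}"
    unfolding wv_def by (intro open_Collect_less continuous_intros)
  ultimately show ?thesis using sets.Int[OF borel_closed[OF cl] borel_open[OF op]] by simp
qed

lemma pyr_lmeasurable:
  fixes c :: "'a::euclidean_space"
  assumes c: "norm c = 1" and A: "A \<subseteq> sphere 0 1" "sphere_cone A \<in> sets lebesgue" and r: "\<rho> \<ge> 0"
  shows "pyr c A \<rho> \<in> lmeasurable"
proof -
  have sub: "pyr c A \<rho> \<subseteq> cball 0 (1 + \<rho>)"
  proof
    fix y assume y: "y \<in> pyr c A \<rho>"
    then have s1: "y \<bullet> c \<le> 1" and w: "norm (wv c y) < \<rho> * (y \<bullet> c)" by (auto simp: pyr_def)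
    have s0: "y \<bullet> c > 0"
    proof (rule ccontr)
      assume "\<not> y \<bullet> c > 0"
      then have "\<rho> * (y \<bullet> c) \<le> 0" using r by (simp add: mult_nonneg_nonpos)
      then show False using w norm_ge_zero[of "wv c y"] by linarith
    qed
    have "\<rho> * (y \<bullet> c) \<le> \<rho>" using s1 r by (simp add: mult_left_le)
    then show "y \<in> cball 0 (1 + \<rho>)" using norm_le_wv[OF c, of y] s0 s1 w by simp
  qed
  have eq: "pyr c A \<rho> = (cn A \<inter> cball 0 (1 + \<rho>)) \<inter> {y. y \<bullet> c \<le> 1 \<and> norm (wv c y) < \<rho> * (y \<bullet> c)}"
    using sub by (auto simp: pyr_def)
  have b: "{y. y \<bullet> c \<le> 1 \<and> norm (wv c y) < \<rho> * (y \<bullet> c)} \<in> sets lebesgue"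
    using borel_pyr_cond[of c \<rho>] by (metis sets_completionI_sets sets_lborel)
  have "pyr c A \<rho> \<in> sets lebesgue"
    unfolding eq using cn_cball_lebesgue[OF A, of "1 + \<rho>"] r b by (metis sets.Int add_pos_nonneg zero_less_one)
  then show ?thesis
    by (rule bounded_set_imp_lmeasurable[OF bounded_subset[OF bounded_cball sub]])
qed


lemma wv_scale: "wv c (k *\<^sub>R y) = k *\<^sub>R wv c y"
  by (simp add: wv_def algebra_simps)

lemma pyr_pos:
  assumes "y \<in> pyr c A \<rho>" "\<rho> \<ge> 0"
  shows "y \<bullet> c > 0"
proof (rule ccontr)
  assume "\<not> y \<bullet> c > 0"
  then have "\<rho> * (y \<bullet> c) \<le> 0" using assms(2) by (simp add: mult_nonneg_nonpos)
  then show False using assms(1) norm_ge_zero[of "wv c y"] by (auto simp: pyr_def)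
qed

lemma pyr_scale:
  assumes b: "0 < b" "b \<le> 1"
  shows "(\<lambda>y. b *\<^sub>R y) ` pyr c A \<rho> = pyr c A \<rho> \<inter> {y. y \<bullet> c \<le> b}"
proof
  show "(\<lambda>y. b *\<^sub>R y) ` pyr c A \<rho> \<subseteq> pyr c A \<rho> \<inter> {y. y \<bullet> c \<le> b}"
  proof
    fix z assume "z \<in> (\<lambda>y. b *\<^sub>R y) ` pyr c A \<rho>"
    then obtain y where z: "z = b *\<^sub>R y" and y: "y \<in> pyr c A \<rho>" by auto
    have y1: "y \<in> cn A" "y \<bullet> c \<le> 1" "norm (wv c y) < \<rho> * (y \<bullet> c)" using y by (auto simp: pyr_def)
    have "b * (y \<bullet> c) \<le> b" using y1(2) b by (simp add: mult_left_le)
    then have "b * (y \<bullet> c) \<le> 1" using b by linarith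
    moreover have "b * norm (wv c y) < b * (\<rho> * (y \<bullet> c))" using y1(3) b by simp
    ultimately show "z \<in> pyr c A \<rho> \<inter> {y. y \<bullet> c \<le> b}"
      using y1 b by (auto simp: z pyr_def cn_scale wv_scale algebra_simps)
  qed
  show "pyr c A \<rho> \<inter> {y. y \<bullet> c \<le> b} \<subseteq> (\<lambda>y. b *\<^sub>R y) ` pyr c A \<rho>"
  proof
    fix z assume z: "z \<in> pyr c A \<rho> \<inter> {y. y \<bullet> c \<le> b}"
    have z1: "z \<in> cn A" "z \<bullet> c \<le> b" "norm (wv c z) < \<rho> * (z \<bullet> c)" using z by (auto simp: pyr_def)
    have "(1/b) * (z \<bullet> c) \<le> 1" using z1(2) b by (simp add: field_simps)
    moreover have "norm (wv c z) / b < (\<rho> * (z \<bullet> c)) / b"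
      by (rule divide_strict_right_mono[OF z1(3) b(1)])
    ultimately have "(1/b) *\<^sub>R z \<in> pyr c A \<rho>"
      using z1 b by (auto simp: pyr_def cn_scale wv_scale algebra_simps)
    moreover have "z = b *\<^sub>R ((1/b) *\<^sub>R z)" using b by simp
    ultimately show "z \<in> (\<lambda>y. b *\<^sub>R y) ` pyr c A \<rho>" by blast
  qed
qed

lemma measure_pyr_le:
  fixes c :: "'a::euclidean_space"
  assumes b: "0 < b" "b \<le> 1"
  shows "measure lebesgue (pyr c A \<rho> \<inter> {y. y \<bullet> c \<le> b}) = b ^ DIM('a) * measure lebesgue (pyr c A \<rho>)"
proof -
  have "measure lebesgue ((\<lambda>x. b *\<^sub>R x + 0) ` pyr c A \<rho>) = \<bar>b\<bar> ^ DIM('a) * measure lebesgue (pyr c A \<rho>)"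
    by (rule measure_lebesgue_affine)
  then show ?thesis using pyr_scale[OF b, of c A \<rho>] b by simp
qed

lemma measure_pyr_strip:
  fixes c :: "'a::euclidean_space"
  assumes c: "norm c = 1" and A: "A \<subseteq> sphere 0 1" "sphere_cone A \<in> sets lebesgue" and r: "\<rho> \<ge> 0"
    and ab: "0 < a" "a \<le> b" "b \<le> 1"
  shows "measure lebesgue (pyr c A \<rho> \<inter> strip c a b) = (b ^ DIM('a) - a ^ DIM('a)) * measure lebesgue (pyr c A \<rho>)"
proof -
  have P: "pyr c A \<rho> \<in> lmeasurable" by (rule pyr_lmeasurable[OF c A r])
  have H: "{y::'a. y \<bullet> c \<le> t} \<in> sets lebesgue" for t
  proof -
    have "closed {y::'a. y \<bullet> c \<le> t}" using closed_halfspace_le[of c t] by (simp add: inner_commute)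
    then show ?thesis by (metis borel_closed sets_completionI_sets sets_lborel)
  qed
  have eq: "pyr c A \<rho> \<inter> strip c a b = (pyr c A \<rho> \<inter> {y. y \<bullet> c \<le> b}) - (pyr c A \<rho> \<inter> {y. y \<bullet> c \<le> a})"
    by (auto simp: strip_def)
  have Pb: "pyr c A \<rho> \<inter> {y. y \<bullet> c \<le> b} \<in> lmeasurable" using P H by (rule fmeasurable_Int_fmeasurable)
  have Pa: "pyr c A \<rho> \<inter> {y. y \<bullet> c \<le> a} \<in> lmeasurable" using P H by (rule fmeasurable_Int_fmeasurable)
  have "measure lebesgue (pyr c A \<rho> \<inter> strip c a b) = measure lebesgue (pyr c A \<rho> \<inter> {y. y \<bullet> c \<le> b}) - measure lebesgue (pyr c A \<rho> \<inter> {y. y \<bullet> c \<le> a})"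
    unfolding eq using Pb Pa ab by (intro measure_Diff) (auto simp: fmeasurable_def)
  also have "\<dots> = (b ^ DIM('a) - a ^ DIM('a)) * measure lebesgue (pyr c A \<rho>)"
    using ab by (simp add: measure_pyr_le left_diff_distrib)
  finally show ?thesis .
qed

lemma stretch_inner: "norm c = 1 \<Longrightarrow> stretch c l y \<bullet> c = y \<bullet> c"
  by (simp add: stretch_def inner_add_left algebra_simps norm_eq_1[symmetric] dot_square_norm power2_eq_square)

lemma stretch_wv: "norm c = 1 \<Longrightarrow> wv c (stretch c l y) = l *\<^sub>R wv c y"
  by (simp add: wv_def stretch_inner) (simp add: stretch_def algebra_simps)

lemma cn_hemi:
  assumes c: "norm c = 1"
  shows "cn (open_hemisphere c) = {y. y \<bullet> c > 0}"
proof -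
  have "y \<noteq> 0 \<and> dir y \<in> open_hemisphere c \<longleftrightarrow> y \<bullet> c > 0" for y
  proof (cases "y = 0")
    case False
    then have "norm (dir y) = 1" by (rule norm_dir)
    moreover have "dir y \<bullet> c = (y \<bullet> c) / norm y" by (simp add: dir_def)
    ultimately show ?thesis using False by (auto simp: open_hemisphere_def divide_pos_pos zero_less_divide_iff)
  qed simp
  then show ?thesis by (auto simp: cn_def)
qed



lemma stretch_scale: "stretch c l (k *\<^sub>R y) = k *\<^sub>R stretch c l y"
  by (simp add: stretch_def algebra_simps)

lemma star_stretch_cn:
  fixes c :: "'a::euclidean_space"
  assumes c: "norm c = 1" and T: "T \<subseteq> open_hemisphere c" and st: "sph_star_shaped c T"
    and l: "0 < l" "l \<le> 1" and y: "y \<in> cn T"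
  shows "stretch c l y \<in> cn T"
proof -
  have y0: "y \<noteq> 0" and xT: "dir y \<in> T" using y by (auto simp: cn_def)
  define x where "x = dir y"
  have xH: "x \<in> open_hemisphere c" using xT T by (auto simp: x_def)
  have s: "x \<bullet> c > 0" using xH by (simp add: open_hemisphere_def)
  have cc: "c \<bullet> c = 1" using c by (simp add: norm_eq_1)
  define \<kappa> where "\<kappa> = l + (1 - l) * (x \<bullet> c)"
  have k0: "\<kappa> > 0" using l s by (simp add: \<kappa>_def add_pos_nonneg)
  have lk: "l \<le> \<kappa>" using l s by (simp add: \<kappa>_def)
  define \<tau> where "\<tau> = l / \<kappa>"
  have tau: "\<tau> \<in> {0..1}" using l k0 lk by (simp add: \<tau>_def)
  define z where "z = (1 - \<tau>) *\<^sub>R c + \<tau> *\<^sub>R x"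
  have zT: "(1 / norm z) *\<^sub>R z \<in> T"
    using st xT tau unfolding sph_star_shaped_def z_def x_def by blast
  have zc: "z \<bullet> c = (1 - \<tau>) + \<tau> * (x \<bullet> c)"
    by (simp add: z_def inner_add_left cc)
  have "z \<bullet> c > 0"
  proof (cases "\<tau> = 1")
    case True then show ?thesis using zc s by simp
  next
    case False then have "1 - \<tau> > 0" using tau by auto
    then show ?thesis using zc s tau by (simp add: add_pos_nonneg)
  qed
  then have z0: "z \<noteq> 0" by auto
  have kz: "\<kappa> *\<^sub>R z = stretch c l x"
  proof -
    have e2: "\<kappa> * \<tau> = l" using k0 by (simp add: \<tau>_def)
    have e1: "\<kappa> * (1 - \<tau>) = (1 - l) * (x \<bullet> c)"
      using e2 by (simp add: right_diff_distrib \<kappa>_def)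
    note e = e1 e2
    have "\<kappa> *\<^sub>R z = (\<kappa> * (1 - \<tau>)) *\<^sub>R c + (\<kappa> * \<tau>) *\<^sub>R x"
      by (simp add: z_def scaleR_add_right)
    also have "\<dots> = ((1 - l) * (x \<bullet> c)) *\<^sub>R c + l *\<^sub>R x" by (simp only: e)
    also have "\<dots> = stretch c l x" by (simp add: stretch_def)
    finally show ?thesis .
  qed
  have yx: "y = norm y *\<^sub>R x" unfolding x_def by (rule dir_decomp)
  have sy: "stretch c l y = (norm y * \<kappa>) *\<^sub>R z"
    by (subst yx) (simp add: stretch_scale kz[symmetric])
  have pos: "norm y * \<kappa> > 0" using y0 k0 by simp
  have "dir (stretch c l y) = dir z" unfolding sy by (rule dir_scale[OF pos])
  then have "dir (stretch c l y) \<in> T" using zT by (simp add: dir_def)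
  moreover have "stretch c l y \<noteq> 0" using sy pos z0 y0 k0 by simp
  ultimately show ?thesis by (simp add: cn_def)
qed


lemma stretch_stretch:
  assumes c: "norm c = 1"
  shows "stretch c l (stretch c m z) = stretch c (l * m) z"
proof -
  define s where "s = z \<bullet> c"
  have e: "stretch c l (stretch c m z) = l *\<^sub>R stretch c m z + ((1 - l) * s) *\<^sub>R c"
    unfolding s_def by (simp only: stretch_def[of c l] stretch_inner[OF c])
  have k: "l * ((1 - m) * s) + (1 - l) * s = (1 - l * m) * s" by algebra
  have "l *\<^sub>R stretch c m z + ((1 - l) * s) *\<^sub>R c
      = (l * m) *\<^sub>R z + (l * ((1 - m) * s) + (1 - l) * s) *\<^sub>R c"
    by (simp add: stretch_def s_def scaleR_add_right scaleR_add_left)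
  also have "\<dots> = stretch c (l * m) z" by (simp only: k) (simp add: stretch_def s_def)
  finally show ?thesis using e by simp
qed

lemma stretch_one: "stretch c 1 z = z"
  by (simp add: stretch_def)

lemma stretch_pyr_sub:
  fixes c :: "'a::euclidean_space"
  assumes c: "norm c = 1" and T: "T \<subseteq> open_hemisphere c" and st: "sph_star_shaped c T"
    and l: "0 < l" "l \<le> 1"
  shows "stretch c l ` pyr c T \<rho> \<subseteq> pyr c T (l * \<rho>)"
proof
  fix z assume "z \<in> stretch c l ` pyr c T \<rho>"
  then obtain y where z: "z = stretch c l y" and y: "y \<in> pyr c T \<rho>" by auto
  have y1: "y \<in> cn T" "y \<bullet> c \<le> 1" "norm (wv c y) < \<rho> * (y \<bullet> c)" using y by (auto simp: pyr_def)
  have "z \<in> cn T" unfolding z by (rule star_stretch_cn[OF c T st l y1(1)])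
  moreover have "l * norm (wv c y) < l * (\<rho> * (y \<bullet> c))" using y1(3) l by simp
  ultimately show "z \<in> pyr c T (l * \<rho>)"
    using y1 l by (simp add: pyr_def z stretch_inner[OF c] stretch_wv[OF c] mult.assoc)
qed

lemma stretch_pyr_H:
  fixes c :: "'a::euclidean_space"
  assumes c: "norm c = 1" and l: "0 < l"
  shows "stretch c l ` pyr c (open_hemisphere c) \<rho> = pyr c (open_hemisphere c) (l * \<rho>)"
proof
  show "stretch c l ` pyr c (open_hemisphere c) \<rho> \<subseteq> pyr c (open_hemisphere c) (l * \<rho>)"
  proof
    fix z assume "z \<in> stretch c l ` pyr c (open_hemisphere c) \<rho>"
    then obtain y where z: "z = stretch c l y" and y: "y \<in> pyr c (open_hemisphere c) \<rho>" by auto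
    have y1: "y \<bullet> c > 0" "y \<bullet> c \<le> 1" "norm (wv c y) < \<rho> * (y \<bullet> c)"
      using y by (auto simp: pyr_def cn_hemi[OF c])
    have "l * norm (wv c y) < l * (\<rho> * (y \<bullet> c))" using y1(3) l by simp
    then show "z \<in> pyr c (open_hemisphere c) (l * \<rho>)"
      using y1 l by (simp add: pyr_def cn_hemi[OF c] z stretch_inner[OF c] stretch_wv[OF c] mult.assoc)
  qed
  show "pyr c (open_hemisphere c) (l * \<rho>) \<subseteq> stretch c l ` pyr c (open_hemisphere c) \<rho>"
  proof
    fix z assume z: "z \<in> pyr c (open_hemisphere c) (l * \<rho>)"
    have z1: "z \<bullet> c > 0" "z \<bullet> c \<le> 1" "norm (wv c z) < l * \<rho> * (z \<bullet> c)"
      using z by (auto simp: pyr_def cn_hemi[OF c])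
    define y where "y = stretch c (1 / l) z"
    have "norm (wv c z) / l < (l * \<rho> * (z \<bullet> c)) / l"
      by (rule divide_strict_right_mono[OF z1(3) l])
    then have "norm (wv c y) < \<rho> * (z \<bullet> c)"
      using l by (simp add: y_def stretch_wv[OF c])
    then have "y \<in> pyr c (open_hemisphere c) \<rho>"
      using z1 by (simp add: pyr_def cn_hemi[OF c] y_def stretch_inner[OF c])
    moreover have "z = stretch c l y"
      using l by (simp add: y_def stretch_stretch[OF c] stretch_one)
    ultimately show "z \<in> stretch c l ` pyr c (open_hemisphere c) \<rho>" by blast
  qed
qed

lemma sphere_cone_hemi:
  fixes c :: "'a::euclidean_space"
  assumes c: "norm c = 1"
  shows "sphere_cone (open_hemisphere c) = {y. y \<bullet> c > 0} \<inter> cball 0 1"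
    and "sphere_cone (open_hemisphere c) \<in> sets lebesgue"
proof -
  have sub: "open_hemisphere c \<subseteq> sphere 0 1" by (auto simp: open_hemisphere_def)
  show e: "sphere_cone (open_hemisphere c) = {y. y \<bullet> c > 0} \<inter> cball 0 1"
    using sphere_cone_eq[OF sub] cn_hemi[OF c] by simp
  have "open {y::'a. y \<bullet> c > 0}" using open_halfspace_gt[of 0 c] by (simp add: inner_commute)
  then have "{y::'a. y \<bullet> c > 0} \<inter> cball 0 1 \<in> sets borel" by (intro sets.Int borel_open borel_closed) auto
  then show "sphere_cone (open_hemisphere c) \<in> sets lebesgue"
    unfolding e by (metis sets_completionI_sets sets_lborel)
qed

definition Pm :: "'a::euclidean_space \<Rightarrow> 'a set \<Rightarrow> real \<Rightarrow> real" where
  "Pm c A \<rho> = measure lebesgue (pyr c A \<rho>)"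

lemma Pm_nonneg: "Pm c A \<rho> \<ge> 0" by (simp add: Pm_def)

lemma pyr_zero: "pyr c A 0 = {}"
  by (auto simp: pyr_def)

lemma Pm_T_mono:
  fixes c :: "'a::euclidean_space"
  assumes c: "norm c = 1" and T: "T \<subseteq> open_hemisphere c" and st: "sph_star_shaped c T"
    and Tm: "sphere_cone T \<in> sets lebesgue"
    and l: "0 < l" "l \<le> 1" and r: "\<rho> \<ge> 0"
  shows "l ^ (DIM('a) - 1) * Pm c T \<rho> \<le> Pm c T (l * \<rho>)"
proof -
  have Ts: "T \<subseteq> sphere 0 1" using T by (auto simp: open_hemisphere_def)
  have P: "pyr c T \<rho> \<in> lmeasurable" by (rule pyr_lmeasurable[OF c Ts Tm r])
  have P': "pyr c T (l * \<rho>) \<in> lmeasurable" by (rule pyr_lmeasurable[OF c Ts Tm]) (use l r in simp)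
  note sm = stretch_measure[OF c l(1) P]
  have "l ^ (DIM('a) - 1) * Pm c T \<rho> = measure lebesgue (stretch c l ` pyr c T \<rho>)"
    using sm by (simp add: Pm_def)
  also have "\<dots> \<le> Pm c T (l * \<rho>)"
    unfolding Pm_def using stretch_pyr_sub[OF c T st l] sm(1) P'
    by (intro measure_mono_fmeasurable) (auto simp: fmeasurable_def)
  finally show ?thesis .
qed

lemma Pm_H_scale:
  fixes c :: "'a::euclidean_space"
  assumes c: "norm c = 1" and l: "0 < l" and r: "\<rho> \<ge> 0"
  shows "Pm c (open_hemisphere c) (l * \<rho>) = l ^ (DIM('a) - 1) * Pm c (open_hemisphere c) \<rho>"
proof -
  have Hs: "open_hemisphere c \<subseteq> sphere 0 1" by (auto simp: open_hemisphere_def)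
  have P: "pyr c (open_hemisphere c) \<rho> \<in> lmeasurable"
    by (rule pyr_lmeasurable[OF c Hs sphere_cone_hemi(2)[OF c] r])
  show ?thesis using stretch_measure(2)[OF c l P] stretch_pyr_H[OF c l] by (simp add: Pm_def)
qed


definition rf :: "real \<Rightarrow> real" where "rf b = sqrt (1 - b\<^sup>2) / b"

lemma rf_sq:
  assumes "0 < b" "b \<le> 1" shows "(rf b)\<^sup>2 = (1 - b\<^sup>2) / b\<^sup>2"
proof -
  have "b\<^sup>2 \<le> 1" using assms by (simp add: power_le_one)
  then show ?thesis by (simp add: rf_def power_divide)
qed

lemma rf_nonneg: "0 < b \<Longrightarrow> b \<le> 1 \<Longrightarrow> rf b \<ge> 0"
  by (simp add: rf_def power_le_one)

lemma inner_le_norm_c: "norm c = 1 \<Longrightarrow> y \<bullet> c \<le> norm y"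
  using norm_cauchy_schwarz[of y c] by simp

lemma strip_lower:
  fixes c :: "'a::euclidean_space"
  assumes c: "norm c = 1" and A: "A \<subseteq> sphere 0 1" and b: "0 < b" "b \<le> 1" and a: "0 \<le> a"
  shows "pyr c A (rf b) \<inter> strip c a b \<subseteq> sphere_cone A \<inter> strip c a b"
proof
  fix y assume y: "y \<in> pyr c A (rf b) \<inter> strip c a b"
  have y1: "y \<in> cn A" "norm (wv c y) < rf b * (y \<bullet> c)" "a < y \<bullet> c" "y \<bullet> c \<le> b"
    using y by (auto simp: pyr_def strip_def)
  define s where "s = y \<bullet> c"
  have s0: "s > 0" using y1(3) a by (simp add: s_def)
  have "(norm (wv c y))\<^sup>2 < (rf b * s)\<^sup>2"
    using y1(2) norm_ge_zero[of "wv c y"] unfolding s_def by (intro power_strict_mono) auto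
  then have "(norm y)\<^sup>2 - s\<^sup>2 < (rf b)\<^sup>2 * s\<^sup>2"
    using norm_wv_sq[OF c, of y] by (simp add: s_def power_mult_distrib)
  also have "\<dots> = (1 - b\<^sup>2) / b\<^sup>2 * s\<^sup>2" using b by (simp add: rf_sq)
  finally have "(norm y)\<^sup>2 < s\<^sup>2 / b\<^sup>2"
    using b by (simp add: field_simps)
  also have "\<dots> \<le> 1" using b s0 y1(4) by (simp add: s_def power_mono divide_le_eq_1)
  finally have "norm y \<le> 1" using abs_square_less_1[of "norm y"] by simp
  then show "y \<in> sphere_cone A \<inter> strip c a b"
    using y y1 sphere_cone_eq[OF A] by auto
qed

lemma strip_upper:
  fixes c :: "'a::euclidean_space"
  assumes c: "norm c = 1" and A: "A \<subseteq> sphere 0 1" and a: "0 < a" "a < 1"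
  shows "sphere_cone A \<inter> strip c a b \<subseteq> pyr c A (rf a) \<inter> strip c a b"
proof
  fix y assume y: "y \<in> sphere_cone A \<inter> strip c a b"
  then have y1: "y \<in> cn A" "norm y \<le> 1" "a < y \<bullet> c" "y \<bullet> c \<le> b"
    using sphere_cone_eq[OF A] by (auto simp: strip_def)
  define s where "s = y \<bullet> c"
  have s0: "s > a" using y1(3) by (simp add: s_def)
  have s1: "s \<le> 1" using inner_le_norm_c[OF c, of y] y1(2) by (simp add: s_def)
  have "(norm (wv c y))\<^sup>2 = (norm y)\<^sup>2 - s\<^sup>2" using norm_wv_sq[OF c] by (simp add: s_def)
  also have "\<dots> \<le> 1 - s\<^sup>2" using y1(2) by (simp add: power_le_one)
  also have "\<dots> < (1 - a\<^sup>2) / a\<^sup>2 * s\<^sup>2"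
  proof -
    have "a\<^sup>2 < s\<^sup>2" using s0 a by (simp add: power_strict_mono)
    then have "(1 - s\<^sup>2) * a\<^sup>2 < (1 - a\<^sup>2) * s\<^sup>2" by (simp add: algebra_simps)
    then have "1 - s\<^sup>2 < (1 - a\<^sup>2) * s\<^sup>2 / a\<^sup>2"
      using pos_less_divide_eq[of "a\<^sup>2" "1 - s\<^sup>2" "(1 - a\<^sup>2) * s\<^sup>2"] a by simp
    then show ?thesis by simp
  qed
  also have "\<dots> = (rf a * s)\<^sup>2" using a by (simp add: rf_sq power_mult_distrib)
  finally have sq: "(norm (wv c y))\<^sup>2 < (rf a * s)\<^sup>2" .
  have "0 \<le> rf a * s" using rf_nonneg[of a] a s0 by simp
  then have "norm (wv c y) < rf a * s" using power_less_imp_less_base[OF sq] by blast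
  then show "y \<in> pyr c A (rf a) \<inter> strip c a b"
    using y1 s1 by (auto simp: pyr_def strip_def s_def)
qed

lemma arccos_less_iff:
  assumes "-1 \<le> u" "u \<le> 1" "0 \<le> r" "r \<le> pi"
  shows "arccos u < r \<longleftrightarrow> cos r < u"
proof
  assume h: "arccos u < r"
  have "cos r < cos (arccos u)"
    using h assms arccos_lbound[of u] by (intro cos_monotone_0_pi) auto
  then show "cos r < u" using assms by simp
next
  assume h: "cos r < u"
  show "arccos u < r"
  proof (rule ccontr)
    assume "\<not> arccos u < r"
    then have "cos (arccos u) \<le> cos r"
      using assms arccos_ubound[of u] by (intro cos_monotone_0_pi_le) auto
    then show False using h assms by simp
  qed
qed

lemma cn_ball:
  fixes c :: "'a::euclidean_space"
  assumes c: "norm c = 1" and r: "0 \<le> r" "r \<le> pi"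
  shows "cn (A \<inter> sph_ball c r) = cn A \<inter> {y. cos r * norm y < y \<bullet> c}"
proof -
  have "dir y \<in> sph_ball c r \<longleftrightarrow> cos r * norm y < y \<bullet> c" if y: "y \<noteq> 0" for y
  proof -
    have nd: "norm (dir y) = 1" using y by (rule norm_dir)
    have "\<bar>dir y \<bullet> c\<bar> \<le> 1" using Cauchy_Schwarz_ineq2[of "dir y" c] nd c by simp
    then have "arccos (dir y \<bullet> c) < r \<longleftrightarrow> cos r < dir y \<bullet> c"
      using r by (intro arccos_less_iff) auto
    also have "\<dots> \<longleftrightarrow> cos r * norm y < y \<bullet> c"
      using y by (simp add: dir_def field_simps)
    finally show ?thesis using nd by (simp add: sph_ball_def)
  qed
  then show ?thesis by (auto simp: cn_def)
qed



lemma telescope_bound: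
  fixes D g :: "nat \<Rightarrow> real"
  assumes D: "\<And>i. i < N \<Longrightarrow> 0 \<le> D i \<and> D i \<le> e" and g: "\<And>i. i < N \<Longrightarrow> g (Suc i) \<le> g i"
  shows "(\<Sum>i<N. D i * (g i - g (Suc i))) \<le> e * (g 0 - g N)"
proof -
  have "(\<Sum>i<N. D i * (g i - g (Suc i))) \<le> (\<Sum>i<N. e * (g i - g (Suc i)))"
    using D g by (intro sum_mono mult_right_mono) auto
  also have "\<dots> = e * (\<Sum>i<N. g i - g (Suc i))" by (simp add: sum_distrib_left)
  also have "(\<Sum>i<N. g i - g (Suc i)) = g 0 - g N" by (rule sum_lessThan_telescope')
  finally show ?thesis .
qed

lemma pow_diff_le:
  fixes a b :: real
  assumes "0 \<le> a" "a \<le> b" "b \<le> 1"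
  shows "b ^ k - a ^ k \<le> real k * (b - a)"
proof (induction k)
  case 0 then show ?case by simp
next
  case (Suc k)
  have "b ^ Suc k - a ^ Suc k = b * (b ^ k - a ^ k) + a ^ k * (b - a)"
    by (simp add: algebra_simps)
  also have "\<dots> \<le> 1 * (real k * (b - a)) + 1 * (b - a)"
  proof (rule add_mono)
    have "b ^ k - a ^ k \<ge> 0" using assms by (simp add: power_mono)
    then show "b * (b ^ k - a ^ k) \<le> 1 * (real k * (b - a))"
      using Suc.IH assms by (intro mult_mono) auto
    show "a ^ k * (b - a) \<le> 1 * (b - a)"
      using assms by (intro mult_right_mono) (auto simp: power_le_one)
  qed
  finally show ?case by (simp add: algebra_simps)
qed

lemma eps_limit_nat:
  fixes x y K :: real
  assumes "\<And>N::nat. N \<ge> 1 \<Longrightarrow> x \<le> y + K / real N"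
  shows "x \<le> y"
proof (rule ccontr)
  assume "\<not> x \<le> y"
  then have d: "x - y > 0" by simp
  obtain n :: nat where n: "K / (x - y) < real n" using reals_Archimedean2 by blast
  define N where "N = max 1 n"
  have N1: "N \<ge> 1" by (simp add: N_def)
  have "K / (x - y) < real N" using n by (simp add: N_def)
  then have "K < real N * (x - y)" using d by (simp add: pos_divide_less_eq mult.commute)
  then have "K / real N < x - y" using N1 by (simp add: divide_less_eq mult.commute)
  then show False using assms[OF N1] by simp
qed

lemma eps_limit_real:
  fixes x y K s0 :: real
  assumes s0: "s0 > 0" and h: "\<And>\<delta>. 0 < \<delta> \<Longrightarrow> \<delta> < s0 \<Longrightarrow> x \<le> y + \<delta> * K"
  shows "x \<le> y"
proof (rule ccontr)
  assume "\<not> x \<le> y"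
  then have d: "x - y > 0" by simp
  define \<delta> where "\<delta> = min (s0 / 2) ((x - y) / (\<bar>K\<bar> + 1))"
  have d0: "\<delta> > 0" using s0 d by (simp add: \<delta>_def)
  have d1: "\<delta> < s0" using s0 by (simp add: \<delta>_def)
  have "\<delta> * K \<le> \<delta> * \<bar>K\<bar>" using d0 by (simp add: mult_left_mono)
  also have "\<dots> \<le> (x - y) / (\<bar>K\<bar> + 1) * \<bar>K\<bar>"
    by (intro mult_right_mono) (auto simp: \<delta>_def)
  also have "\<dots> < x - y"
  proof -
    have p: "\<bar>K\<bar> + 1 > 0" by simp
    have "(x - y) * \<bar>K\<bar> < (x - y) * (\<bar>K\<bar> + 1)" using d by simp
    then have "((x - y) * \<bar>K\<bar>) / (\<bar>K\<bar> + 1) < x - y" by (simp add: pos_divide_less_eq[OF p])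
    then show ?thesis by simp
  qed
  finally show False using h[OF d0 d1] by simp
qed


lemma halfspace_le_lebesgue: "{y::'a::euclidean_space. y \<bullet> c \<le> t} \<in> sets lebesgue"
proof -
  have "closed {y::'a. y \<bullet> c \<le> t}" using closed_halfspace_le[of c t] by (simp add: inner_commute)
  then show ?thesis by (metis borel_closed sets_completionI_sets sets_lborel)
qed

lemma halfspace_gt_lebesgue: "{y::'a::euclidean_space. y \<bullet> c > t} \<in> sets lebesgue"
proof -
  have "open {y::'a. y \<bullet> c > t}" using open_halfspace_gt[of t c] by (simp add: inner_commute)
  then show ?thesis by (metis borel_open sets_completionI_sets sets_lborel)
qed

lemma strip_lebesgue: "strip c a b \<in> sets (lebesgue :: 'a::euclidean_space measure)"
proof -
  have "strip c a b = {y::'a. y \<bullet> c > a} \<inter> {y. y \<bullet> c \<le> b}" by (auto simp: strip_def)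
  then show ?thesis using halfspace_le_lebesgue halfspace_gt_lebesgue by (metis sets.Int)
qed

lemma strip_partition:
  fixes E :: "'a::euclidean_space set"
  assumes E: "E \<in> lmeasurable" and t: "\<And>i. t i \<le> t (Suc i)"
  shows "measure lebesgue (E \<inter> strip c (t 0) (t N)) = (\<Sum>i<N. measure lebesgue (E \<inter> strip c (t i) (t (Suc i))))"
proof (induction N)
  case 0
  have "E \<inter> strip c (t 0) (t 0) = {}" by (auto simp: strip_def)
  then show ?case by simp
next
  case (Suc N)
  have m: "t 0 \<le> t N" using t by (simp add: lift_Suc_mono_le)
  have eq: "E \<inter> strip c (t 0) (t (Suc N)) = (E \<inter> strip c (t 0) (t N)) \<union> (E \<inter> strip c (t N) (t (Suc N)))"
    using m t[of N] by (auto simp: strip_def)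
  have f1: "E \<inter> strip c (t 0) (t N) \<in> lmeasurable" using E strip_lebesgue by (rule fmeasurable_Int_fmeasurable)
  have f2: "E \<inter> strip c (t N) (t (Suc N)) \<in> lmeasurable" using E strip_lebesgue by (rule fmeasurable_Int_fmeasurable)
  have "measure lebesgue (E \<inter> strip c (t 0) (t (Suc N))) = measure lebesgue (E \<inter> strip c (t 0) (t N)) + measure lebesgue (E \<inter> strip c (t N) (t (Suc N)))"
    unfolding eq using f1 f2 by (intro measure_Union) (auto simp: fmeasurable_def strip_def)
  then show ?case using Suc.IH by simp
qed

lemma rf_mono:
  assumes "0 < a" "a \<le> b" "b \<le> 1"
  shows "rf b \<le> rf a"
proof -
  have "a\<^sup>2 \<le> b\<^sup>2" using assms by (simp add: power_mono)
  then have h1: "sqrt (1 - b\<^sup>2) \<le> sqrt (1 - a\<^sup>2)" by simp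
  have "b\<^sup>2 \<le> 1" using assms by (simp add: power_le_one)
  then have h2: "sqrt (1 - b\<^sup>2) \<ge> 0" by simp
  have h3: "a\<^sup>2 \<le> 1" using assms by (simp add: power_le_one)
  show ?thesis unfolding rf_def using assms h1 h2 h3 by (intro frac_le) auto
qed

lemma rf_one: "rf 1 = 0" by (simp add: rf_def)

lemma rf_cos: "0 < r \<Longrightarrow> r < pi / 2 \<Longrightarrow> rf (cos r) = tan r"
proof -
  assume r: "0 < r" "r < pi / 2"
  have "sin r > 0" using r by (intro sin_gt_zero) auto
  moreover have "1 - (cos r)\<^sup>2 = (sin r)\<^sup>2" by (simp add: sin_squared_eq)
  ultimately show ?thesis by (simp add: rf_def tan_def)
qed

lemma Pm_T_lower:
  fixes c :: "'a::euclidean_space"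
  assumes c: "norm c = 1" and T: "T \<subseteq> open_hemisphere c" and st: "sph_star_shaped c T"
    and Tm: "sphere_cone T \<in> sets lebesgue" and dim: "DIM('a) \<ge> 2"
    and r: "0 \<le> \<rho>'" "\<rho>' \<le> \<rho>" "0 < \<rho>"
  shows "(\<rho>' / \<rho>) ^ (DIM('a) - 1) * Pm c T \<rho> \<le> Pm c T \<rho>'"
proof (cases "\<rho>' = 0")
  case True
  have "DIM('a) - 1 \<noteq> 0" using dim by simp
  then have "(\<rho>' / \<rho>) ^ (DIM('a) - 1) = 0" using True by simp
  then show ?thesis using Pm_nonneg[of c T \<rho>'] by (simp only: mult_zero_left)
next
  case False
  then have l: "0 < \<rho>' / \<rho>" "\<rho>' / \<rho> \<le> 1" using r by auto
  have "(\<rho>' / \<rho>) ^ (DIM('a) - 1) * Pm c T \<rho> \<le> Pm c T ((\<rho>' / \<rho>) * \<rho>)"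
    by (rule Pm_T_mono[OF c T st Tm l]) (use r in simp)
  then show ?thesis using r by simp
qed

lemma Pm_T_upper:
  fixes c :: "'a::euclidean_space"
  assumes c: "norm c = 1" and T: "T \<subseteq> open_hemisphere c" and st: "sph_star_shaped c T"
    and Tm: "sphere_cone T \<in> sets lebesgue" and dim: "DIM('a) \<ge> 2"
    and r: "0 < \<rho>0" "\<rho>0 \<le> \<rho>"
  shows "\<rho>0 ^ (DIM('a) - 1) * Pm c T \<rho> \<le> \<rho> ^ (DIM('a) - 1) * Pm c T \<rho>0"
proof -
  have "(\<rho>0 / \<rho>) ^ (DIM('a) - 1) * Pm c T \<rho> \<le> Pm c T \<rho>0"
    by (rule Pm_T_lower[OF c T st Tm dim]) (use r in auto)
  then have "\<rho> ^ (DIM('a) - 1) * ((\<rho>0 / \<rho>) ^ (DIM('a) - 1) * Pm c T \<rho>) \<le> \<rho> ^ (DIM('a) - 1) * Pm c T \<rho>0"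
    using r by (intro mult_left_mono) auto
  moreover have "\<rho> ^ (DIM('a) - 1) * (\<rho>0 / \<rho>) ^ (DIM('a) - 1) = \<rho>0 ^ (DIM('a) - 1)"
    using r by (simp add: power_divide[symmetric] power_mult_distrib[symmetric])
  ultimately show ?thesis by (simp add: mult.assoc[symmetric])
qed

lemma Pm_H_formula:
  fixes c :: "'a::euclidean_space"
  assumes c: "norm c = 1" and dim: "DIM('a) \<ge> 2" and r: "\<rho> \<ge> 0"
  shows "Pm c (open_hemisphere c) \<rho> = \<rho> ^ (DIM('a) - 1) * Pm c (open_hemisphere c) 1"
proof (cases "\<rho> = 0")
  case True then show ?thesis using dim by (simp add: Pm_def pyr_zero)
next
  case False
  then show ?thesis using Pm_H_scale[OF c, of \<rho> 1] r by simp
qed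


lemma sq_less_iff:
  fixes a b :: real
  assumes "0 \<le> a" "0 \<le> b"
  shows "a < b \<longleftrightarrow> a\<^sup>2 < b\<^sup>2"
  using power_mono_iff[of b a 2] assms by (auto simp: not_le[symmetric])

lemma cos_sin_pos:
  assumes "0 < r" "r < pi / 2"
  shows "cos r > 0" "sin r > 0" "(cos r)\<^sup>2 + (sin r)\<^sup>2 = 1" "tan r = sin r / cos r"
  using assms by (auto intro!: cos_gt_zero sin_gt_zero simp: tan_def)

lemma region1:
  fixes c :: "'a::euclidean_space"
  assumes c: "norm c = 1" and A: "A \<subseteq> open_hemisphere c" and r: "0 < r" "r < pi / 2"
  shows "sphere_cone (A \<inter> sph_ball c r) \<inter> {y. y \<bullet> c \<le> cos r} = pyr c A (tan r) \<inter> {y. y \<bullet> c \<le> cos r}"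
proof -
  note cs = cos_sin_pos[OF r]
  define co where "co = cos r"
  define si where "si = sin r"
  have co: "co > 0" "co \<le> 1" and si: "si > 0" and cs2: "co\<^sup>2 + si\<^sup>2 = 1" and tn: "tan r = si / co"
    using cs by (auto simp: co_def si_def)
  have AB: "A \<inter> sph_ball c r \<subseteq> sphere 0 1" using A by (auto simp: open_hemisphere_def)
  have sc: "sphere_cone (A \<inter> sph_ball c r) = cn A \<inter> {y. co * norm y < y \<bullet> c} \<inter> cball 0 1"
    using sphere_cone_eq[OF AB] cn_ball[OF c, of r A] r by (simp add: co_def)
  have key: "co * norm (wv c y) < si * (y \<bullet> c) \<longleftrightarrow> co * norm y < y \<bullet> c" if s0: "y \<bullet> c > 0" for y
  proof -
    define s where "s = y \<bullet> c"
    have w2: "(norm (wv c y))\<^sup>2 = (norm y)\<^sup>2 - s\<^sup>2" using norm_wv_sq[OF c] by (simp add: s_def)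
    have "co * norm (wv c y) < si * s \<longleftrightarrow> (co * norm (wv c y))\<^sup>2 < (si * s)\<^sup>2"
      using co si s0 unfolding s_def by (intro sq_less_iff) auto
    also have "\<dots> \<longleftrightarrow> co\<^sup>2 * (norm y)\<^sup>2 < (co\<^sup>2 + si\<^sup>2) * s\<^sup>2"
      by (simp add: power_mult_distrib w2 algebra_simps)
    also have "\<dots> \<longleftrightarrow> (co * norm y)\<^sup>2 < s\<^sup>2" by (simp add: cs2 power_mult_distrib)
    also have "\<dots> \<longleftrightarrow> co * norm y < s"
      using co s0 unfolding s_def by (intro sq_less_iff[symmetric]) auto
    finally show ?thesis by (simp add: s_def)
  qed
  show ?thesis
  proof
    show "sphere_cone (A \<inter> sph_ball c r) \<inter> {y. y \<bullet> c \<le> cos r} \<subseteq> pyr c A (tan r) \<inter> {y. y \<bullet> c \<le> cos r}"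
    proof
      fix y assume y: "y \<in> sphere_cone (A \<inter> sph_ball c r) \<inter> {y. y \<bullet> c \<le> cos r}"
      then have y1: "y \<in> cn A" "co * norm y < y \<bullet> c" "norm y \<le> 1" "y \<bullet> c \<le> co"
        using sc by (auto simp: co_def)
      have s0: "y \<bullet> c > 0" using y1(2) co by (smt (verit) mult_nonneg_nonneg norm_ge_zero)
      have "co * norm (wv c y) < si * (y \<bullet> c)" using key[OF s0] y1(2) by simp
      then have "norm (wv c y) < tan r * (y \<bullet> c)" using co by (simp add: tn field_simps)
      moreover have s1: "y \<bullet> c \<le> 1" using y1(4) cos_le_one[of r] unfolding co_def by linarith
      ultimately show "y \<in> pyr c A (tan r) \<inter> {y. y \<bullet> c \<le> cos r}"
        using y1 s1 by (simp add: pyr_def co_def)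
    qed
    show "pyr c A (tan r) \<inter> {y. y \<bullet> c \<le> cos r} \<subseteq> sphere_cone (A \<inter> sph_ball c r) \<inter> {y. y \<bullet> c \<le> cos r}"
    proof
      fix y assume y: "y \<in> pyr c A (tan r) \<inter> {y. y \<bullet> c \<le> cos r}"
      then have y1: "y \<in> cn A" "norm (wv c y) < tan r * (y \<bullet> c)" "y \<bullet> c \<le> co"
        by (auto simp: pyr_def co_def)
      have tpos: "tan r \<ge> 0" using co si by (simp add: tn)
      have s0: "y \<bullet> c > 0" using y pyr_pos[OF _ tpos] by auto
      have "co * norm (wv c y) < si * (y \<bullet> c)" using y1(2) co by (simp add: tn field_simps)
      then have lt: "co * norm y < y \<bullet> c" using key[OF s0] by simp
      then have "co * norm y < co" using y1(3) by simp
      then have "norm y \<le> 1" using co by simp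
      then show "y \<in> sphere_cone (A \<inter> sph_ball c r) \<inter> {y. y \<bullet> c \<le> cos r}"
        using y1 lt sc by (auto simp: co_def)
    qed
  qed
qed

lemma region2:
  fixes c :: "'a::euclidean_space"
  assumes c: "norm c = 1" and A: "A \<subseteq> open_hemisphere c" and r: "0 \<le> r" "r \<le> pi / 2"
  shows "sphere_cone (A \<inter> sph_ball c r) \<inter> {y. y \<bullet> c > cos r} = sphere_cone A \<inter> {y. y \<bullet> c > cos r}"
proof -
  have As: "A \<subseteq> sphere 0 1" using A by (auto simp: open_hemisphere_def)
  have AB: "A \<inter> sph_ball c r \<subseteq> sphere 0 1" using A by (auto simp: open_hemisphere_def)
  have co: "cos r \<ge> 0" using r by (intro cos_ge_zero) auto
  have "cos r * norm y < y \<bullet> c" if "norm y \<le> 1" "y \<bullet> c > cos r" for y :: 'a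
  proof -
    have "cos r * norm y \<le> cos r" using that co by (simp add: mult_left_le)
    then show ?thesis using that by simp
  qed
  then show ?thesis
    using sphere_cone_eq[OF AB] sphere_cone_eq[OF As] cn_ball[OF c, of r A] r by auto
qed

lemma ball_sub_hemi:
  fixes c :: "'a::euclidean_space"
  assumes c: "norm c = 1" and r: "0 \<le> r" "r \<le> pi / 2"
  shows "sph_ball c r \<subseteq> open_hemisphere c"
proof
  fix x assume x: "x \<in> sph_ball c r"
  then have nx: "norm x = 1" and a: "arccos (x \<bullet> c) < r" by (auto simp: sph_ball_def)
  have "\<bar>x \<bullet> c\<bar> \<le> 1" using Cauchy_Schwarz_ineq2[of x c] nx c by simp
  then have "cos r < x \<bullet> c" using arccos_less_iff[of "x \<bullet> c" r] a r by auto
  moreover have "cos r \<ge> 0" using r by (intro cos_ge_zero) auto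
  ultimately show "x \<in> open_hemisphere c" using nx by (simp add: open_hemisphere_def)
qed

lemma sphere_cone_ball_meas:
  fixes c :: "'a::euclidean_space"
  assumes c: "norm c = 1" and A: "A \<subseteq> sphere 0 1" and Am: "sphere_cone A \<in> sets lebesgue"
    and r: "0 \<le> r" "r \<le> pi"
  shows "sphere_cone (A \<inter> sph_ball c r) \<in> sets lebesgue"
proof -
  have AB: "A \<inter> sph_ball c r \<subseteq> sphere 0 1" using A by auto
  have eq: "sphere_cone (A \<inter> sph_ball c r) = sphere_cone A \<inter> {y. cos r * norm y < y \<bullet> c}"
    using sphere_cone_eq[OF AB] sphere_cone_eq[OF A] cn_ball[OF c r, of A] by auto
  have "open {y::'a. cos r * norm y < y \<bullet> c}" by (intro open_Collect_less continuous_intros)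
  then have "{y::'a. cos r * norm y < y \<bullet> c} \<in> sets lebesgue"
    by (metis borel_open sets_completionI_sets sets_lborel)
  then show ?thesis unfolding eq using Am by (metis sets.Int)
qed


definition Zc :: "'a::euclidean_space \<Rightarrow> 'a set" where
  "Zc c = {y. 0 < y \<bullet> c \<and> y \<bullet> c \<le> 1 \<and> norm (wv c y) \<le> 1}"

lemma norm_wv_le: "norm c = 1 \<Longrightarrow> norm (wv c y) \<le> norm y"
proof -
  assume c: "norm c = 1"
  have "(norm (wv c y))\<^sup>2 \<le> (norm y)\<^sup>2" using norm_wv_sq[OF c, of y] by simp
  then show ?thesis by (simp add: power_mono_iff[symmetric])
qed

lemma Zc_lmeasurable:
  fixes c :: "'a::euclidean_space"
  assumes c: "norm c = 1"
  shows "Zc c \<in> lmeasurable"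
proof -
  have eq: "Zc c = {y. 0 < y \<bullet> c} \<inter> ({y. y \<bullet> c \<le> 1} \<inter> {y. norm (wv c y) \<le> 1})" by (auto simp: Zc_def)
  have o: "open {y::'a. 0 < y \<bullet> c}" using open_halfspace_gt[of 0 c] by (simp add: inner_commute)
  have c1: "closed {y::'a. y \<bullet> c \<le> 1}" using closed_halfspace_le[of c 1] by (simp add: inner_commute)
  have c2: "closed {y::'a. norm (wv c y) \<le> 1}" unfolding wv_def by (intro closed_Collect_le continuous_intros)
  have "Zc c \<in> sets borel" unfolding eq using o c1 c2 by (metis borel_open borel_closed sets.Int)
  then have m: "Zc c \<in> sets lebesgue" by (metis sets_completionI_sets sets_lborel)
  have "Zc c \<subseteq> cball 0 2"
  proof
    fix y assume "y \<in> Zc c"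
    then have "0 < y \<bullet> c" "y \<bullet> c \<le> 1" "norm (wv c y) \<le> 1" by (auto simp: Zc_def)
    then show "y \<in> cball 0 2" using norm_le_wv[OF c, of y] by simp
  qed
  then show ?thesis using m bounded_set_imp_lmeasurable bounded_subset[OF bounded_cball] by blast
qed

lemma slab_bound:
  fixes c :: "'a::euclidean_space"
  assumes c: "norm c = 1" and d: "0 < \<delta>" "\<delta> \<le> 1"
  shows "measure lebesgue (sphere_cone (open_hemisphere c) \<inter> strip c 0 \<delta>) \<le> \<delta> * measure lebesgue (Zc c)"
proof -
  define G where "G = (\<lambda>y. \<delta> *\<^sub>R y + 0) \<circ> stretch c (1 / \<delta>)"
  have d': "0 < 1 / \<delta>" using d by simp
  note Z = Zc_lmeasurable[OF c]
  note S = stretch_measure[OF c d' Z]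
  have GZ: "G ` Zc c = (\<lambda>y. \<delta> *\<^sub>R y + 0) ` (stretch c (1 / \<delta>) ` Zc c)"
    by (simp add: G_def image_comp)
  have mGZ: "measure lebesgue (G ` Zc c) = \<delta> * measure lebesgue (Zc c)"
  proof -
    have e1: "measure lebesgue (G ` Zc c) = \<bar>\<delta>\<bar> ^ DIM('a) * ((1 / \<delta>) ^ (DIM('a) - 1) * measure lebesgue (Zc c))"
      unfolding GZ measure_lebesgue_affine S(2) by simp
    have e2: "\<bar>\<delta>\<bar> ^ DIM('a) * (1 / \<delta>) ^ (DIM('a) - 1) = \<delta>"
    proof -
      have "DIM('a) = Suc (DIM('a) - 1)" by simp
      then have "\<delta> ^ DIM('a) = \<delta> * \<delta> ^ (DIM('a) - 1)" by (metis power_Suc)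
      then show ?thesis using d by (simp add: power_one_over field_simps)
    qed
    show ?thesis using e1 by (simp only: mult.assoc[symmetric] e2)
  qed
  have sGZ: "G ` Zc c \<in> sets lebesgue"
    unfolding GZ using scale_image_lebesgue[OF fmeasurableD[OF S(1)], of \<delta>] d by simp
  have fGZ: "G ` Zc c \<in> lmeasurable"
  proof -
    have "emeasure lebesgue (G ` Zc c) = \<bar>\<delta>\<bar> ^ DIM('a) * emeasure lebesgue (stretch c (1 / \<delta>) ` Zc c)"
      unfolding GZ by (rule emeasure_lebesgue_affine)
    also have "\<dots> < \<infinity>"
    proof -
      have fin: "emeasure lebesgue (stretch c (1 / \<delta>) ` Zc c) < \<infinity>" using S(1) fmeasurable_def by blast
      show ?thesis by (metis ennreal_less_top ennreal_mult_less_top fin infinity_ennreal_def)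
    qed
    finally show ?thesis using sGZ by (intro fmeasurableI)
  qed
  have sub: "sphere_cone (open_hemisphere c) \<inter> strip c 0 \<delta> \<subseteq> G ` Zc c"
  proof
    fix z assume z: "z \<in> sphere_cone (open_hemisphere c) \<inter> strip c 0 \<delta>"
    then have z1: "0 < z \<bullet> c" "z \<bullet> c \<le> \<delta>" "norm z \<le> 1"
      using sphere_cone_hemi(1)[OF c] by (auto simp: strip_def)
    define y where "y = stretch c \<delta> ((1 / \<delta>) *\<^sub>R z)"
    have yc: "y \<bullet> c = (z \<bullet> c) / \<delta>" by (simp add: y_def stretch_inner[OF c])
    have yw: "wv c y = wv c z" using d by (simp add: y_def stretch_wv[OF c] wv_scale)
    have "y \<in> Zc c" using z1 d yc yw norm_wv_le[OF c, of z] by (simp add: Zc_def divide_le_eq_1)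
    moreover have "G y = z" using d by (simp add: G_def y_def stretch_stretch[OF c] stretch_one)
    ultimately show "z \<in> G ` Zc c" by blast
  qed
  have "measure lebesgue (sphere_cone (open_hemisphere c) \<inter> strip c 0 \<delta>) \<le> measure lebesgue (G ` Zc c)"
    using sub fGZ sets.Int[OF sphere_cone_hemi(2)[OF c] strip_lebesgue[of c 0 \<delta>]]
    by (intro measure_mono_fmeasurable) auto
  then show ?thesis using mGZ by simp
qed

lemma Pm_H_pos:
  fixes c :: "'a::euclidean_space"
  assumes c: "norm c = 1"
  shows "Pm c (open_hemisphere c) 1 > 0"
proof -
  have cc: "c \<bullet> c = 1" using c by (simp add: norm_eq_1)
  have sub: "ball ((1/2) *\<^sub>R c) (1/4) \<subseteq> pyr c (open_hemisphere c) 1"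
  proof
    fix y assume y: "y \<in> ball ((1/2) *\<^sub>R c) (1/4)"
    define z where "z = y - (1/2) *\<^sub>R c"
    have nz: "norm z < 1/4" using y by (simp add: z_def dist_norm norm_minus_commute)
    have yz: "y = (1/2) *\<^sub>R c + z" by (simp add: z_def)
    have zc: "\<bar>z \<bullet> c\<bar> \<le> norm z" using Cauchy_Schwarz_ineq2[of z c] c by simp
    have yc: "y \<bullet> c = 1/2 + z \<bullet> c" by (simp add: yz inner_add_left cc)
    have wy: "wv c y = wv c z" by (simp add: yz wv_def inner_add_left cc algebra_simps)
    have nw: "norm (wv c z) \<le> norm z" by (rule norm_wv_le[OF c])
    have zc2: "- norm z \<le> z \<bullet> c" "z \<bullet> c \<le> norm z" using zc by (auto simp: abs_le_iff)
    have a1: "0 < y \<bullet> c" "y \<bullet> c \<le> 1" "norm (wv c y) < y \<bullet> c"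
      using nz zc2 nw unfolding yc wy by linarith+
    then show "y \<in> pyr c (open_hemisphere c) 1"
      by (simp add: pyr_def cn_hemi[OF c])
  qed
  have Hs: "open_hemisphere c \<subseteq> sphere 0 1" by (auto simp: open_hemisphere_def)
  have P: "pyr c (open_hemisphere c) 1 \<in> lmeasurable"
    by (rule pyr_lmeasurable[OF c Hs sphere_cone_hemi(2)[OF c]]) simp
  have "0 < measure lebesgue (ball ((1/2) *\<^sub>R c) (1/4))"
    using content_ball_pos[of "1/4" "(1/2) *\<^sub>R c"] by simp
  also have "\<dots> \<le> Pm c (open_hemisphere c) 1"
    unfolding Pm_def using sub P by (intro measure_mono_fmeasurable) auto
  finally show ?thesis .
qed



lemma sphere_cone_lmeasurable:
  assumes "A \<subseteq> sphere 0 1" "sphere_cone A \<in> sets lebesgue"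
  shows "sphere_cone (A :: 'a::euclidean_space set) \<in> lmeasurable"
proof -
  have "sphere_cone A \<subseteq> cball 0 1" using sphere_cone_eq[OF assms(1)] by auto
  then show ?thesis using assms(2) bounded_set_imp_lmeasurable bounded_subset[OF bounded_cball] by blast
qed

lemma strip_meas_lower:
  fixes c :: "'a::euclidean_space"
  assumes c: "norm c = 1" and A: "A \<subseteq> sphere 0 1" "sphere_cone A \<in> sets lebesgue"
    and ab: "0 < a" "a \<le> b" "b \<le> 1"
  shows "(b ^ DIM('a) - a ^ DIM('a)) * Pm c A (rf b) \<le> measure lebesgue (sphere_cone A \<inter> strip c a b)"
proof -
  have b0: "0 < b" using ab by simp
  have "(b ^ DIM('a) - a ^ DIM('a)) * Pm c A (rf b) = measure lebesgue (pyr c A (rf b) \<inter> strip c a b)"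
    unfolding Pm_def using measure_pyr_strip[OF c A rf_nonneg[OF b0 ab(3)] ab] by simp
  also have "\<dots> \<le> measure lebesgue (sphere_cone A \<inter> strip c a b)"
  proof (rule measure_mono_fmeasurable)
    show "pyr c A (rf b) \<inter> strip c a b \<subseteq> sphere_cone A \<inter> strip c a b"
      by (rule strip_lower[OF c A(1) b0 ab(3)]) (use ab in simp)
    show "pyr c A (rf b) \<inter> strip c a b \<in> sets lebesgue"
      using pyr_lmeasurable[OF c A rf_nonneg[OF b0 ab(3)]] strip_lebesgue by (metis fmeasurableD sets.Int)
    show "sphere_cone A \<inter> strip c a b \<in> lmeasurable"
      using sphere_cone_lmeasurable[OF A] strip_lebesgue by (rule fmeasurable_Int_fmeasurable)
  qed
  finally show ?thesis .
qed

lemma strip_meas_upper: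
  fixes c :: "'a::euclidean_space"
  assumes c: "norm c = 1" and A: "A \<subseteq> sphere 0 1" "sphere_cone A \<in> sets lebesgue"
    and ab: "0 < a" "a < 1" "a \<le> b" "b \<le> 1"
  shows "measure lebesgue (sphere_cone A \<inter> strip c a b) \<le> (b ^ DIM('a) - a ^ DIM('a)) * Pm c A (rf a)"
proof -
  have ra: "rf a \<ge> 0" using ab by (intro rf_nonneg) auto
  have "measure lebesgue (sphere_cone A \<inter> strip c a b) \<le> measure lebesgue (pyr c A (rf a) \<inter> strip c a b)"
  proof (rule measure_mono_fmeasurable)
    show "sphere_cone A \<inter> strip c a b \<subseteq> pyr c A (rf a) \<inter> strip c a b"
      by (rule strip_upper[OF c A(1) ab(1,2)])
    show "sphere_cone A \<inter> strip c a b \<in> sets lebesgue"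
      using A(2) strip_lebesgue by (rule sets.Int)
    show "pyr c A (rf a) \<inter> strip c a b \<in> lmeasurable"
      using pyr_lmeasurable[OF c A ra] strip_lebesgue by (rule fmeasurable_Int_fmeasurable)
  qed
  also have "\<dots> = (b ^ DIM('a) - a ^ DIM('a)) * Pm c A (rf a)"
    unfolding Pm_def using measure_pyr_strip[OF c A ra ab(1,3,4)] by simp
  finally show ?thesis .
qed


lemma cos_facts:
  assumes "0 < r" "r < pi / 2"
  shows "0 < cos r" "cos r < 1" "0 < tan r" "rf (cos r) = tan r"
proof -
  show "0 < cos r" using assms by (intro cos_gt_zero) auto
  have "cos r < cos 0" using assms by (intro cos_monotone_0_pi) auto
  then show "cos r < 1" by simp
  show "0 < tan r" using assms by (intro tan_gt_zero) auto
  show "rf (cos r) = tan r" by (rule rf_cos[OF assms])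
qed

lemma K1:
  fixes c :: "'a::euclidean_space"
  assumes c: "norm c = 1" and T: "T \<subseteq> open_hemisphere c" and st: "sph_star_shaped c T"
    and Tm: "sphere_cone T \<in> sets lebesgue" and dim: "DIM('a) \<ge> 2" and r: "0 < r" "r < pi / 2"
  shows "Pm c T (tan r) * measure lebesgue (sphere_cone (open_hemisphere c) \<inter> strip c (cos r) 1)
         \<le> Pm c (open_hemisphere c) (tan r) * measure lebesgue (sphere_cone T \<inter> strip c (cos r) 1)"
proof -
  define H where "H = open_hemisphere c"
  define s0 where "s0 = cos r"
  define R where "R = tan r"
  define n where "n = DIM('a) - 1"
  define C where "C = Pm c H 1"
  define p where "p = Pm c T R"
  define Kt where "Kt = sphere_cone T"
  define Kh where "Kh = sphere_cone H"
  define Y2 where "Y2 = measure lebesgue (Kt \<inter> strip c s0 1)"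
  define Q2 where "Q2 = measure lebesgue (Kh \<inter> strip c s0 1)"
  note cf = cos_facts[OF r]
  have s0: "0 < s0" "s0 < 1" using cf by (auto simp: s0_def)
  have R0: "R > 0" and Rrf: "rf s0 = R" using cf by (auto simp: R_def s0_def)
  have n1: "n \<ge> 1" using dim by (simp add: n_def)
  have Ts: "T \<subseteq> sphere 0 1" using T by (auto simp: open_hemisphere_def)
  have Hs: "H \<subseteq> sphere 0 1" by (auto simp: H_def open_hemisphere_def)
  have Hm: "sphere_cone H \<in> sets lebesgue" using sphere_cone_hemi(2)[OF c] by (simp add: H_def)
  have PH: "Pm c H \<rho> = \<rho> ^ n * C" if "\<rho> \<ge> 0" for \<rho>
    using Pm_H_formula[OF c dim that] by (simp add: H_def C_def n_def)
  have p0: "p \<ge> 0" and C0: "C \<ge> 0" by (auto simp: p_def C_def Pm_nonneg)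
  have KtL: "Kt \<in> lmeasurable" using sphere_cone_lmeasurable[OF Ts Tm] by (simp add: Kt_def)
  have KhL: "Kh \<in> lmeasurable" using sphere_cone_lmeasurable[OF Hs Hm] by (simp add: Kh_def)
  have main: "p * Q2 \<le> Pm c H R * Y2 + (p * C * real DIM('a) * R ^ n) / real N" if N1: "N \<ge> 1" for N :: nat
  proof -
    define t where "t i = s0 + real i * (1 - s0) / real N" for i :: nat
    have Npos: "real N > 0" using N1 by simp
    have step: "(1 - s0) / real N \<ge> 0" using s0 Npos by simp
    have tmono: "t i \<le> t (Suc i)" for i using step by (simp add: t_def distrib_right add_divide_distrib)
    have t0: "t 0 = s0" by (simp add: t_def)
    have tN: "t N = 1" using Npos by (simp add: t_def)
    have tge: "t i \<ge> s0" for i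
    proof -
      have "real i * (1 - s0) / real N \<ge> 0" using s0 Npos by (intro divide_nonneg_pos mult_nonneg_nonneg) auto
      then show ?thesis by (simp add: t_def)
    qed
    have tle1: "t i \<le> 1" if "i \<le> N" for i
    proof -
      have "real i * (1 - s0) / real N \<le> real N * (1 - s0) / real N"
        using that s0 Npos by (intro divide_right_mono mult_right_mono) auto
      then show ?thesis using Npos by (simp add: t_def)
    qed
    have tlt1: "t i < 1" if "i < N" for i
    proof -
      have "real i * (1 - s0) / real N < real N * (1 - s0) / real N"
        using that s0 Npos by (intro divide_strict_right_mono mult_strict_right_mono) auto
      then show ?thesis using Npos by (simp add: t_def)
    qed
    have tdiff: "t (Suc i) - t i = (1 - s0) / real N" for i
      by (simp add: t_def distrib_right add_divide_distrib)
    define \<Delta> where "\<Delta> i = t (Suc i) ^ DIM('a) - t i ^ DIM('a)" for i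
    define \<rho> where "\<rho> i = rf (t i)" for i
    have \<Delta>b: "0 \<le> \<Delta> i \<and> \<Delta> i \<le> real DIM('a) / real N" if "i < N" for i
    proof
      have ti: "0 \<le> t i" "t i \<le> t (Suc i)" "t (Suc i) \<le> 1"
        using tge[of i] s0 tmono[of i] tle1[of "Suc i"] that by auto
      show "0 \<le> \<Delta> i" using ti by (simp add: \<Delta>_def power_mono)
      have "\<Delta> i \<le> real DIM('a) * (t (Suc i) - t i)" unfolding \<Delta>_def by (rule pow_diff_le[OF ti])
      also have "\<dots> = real DIM('a) * ((1 - s0) / real N)" by (simp add: tdiff)
      also have "\<dots> \<le> real DIM('a) * (1 / real N)"
        using s0 Npos by (intro mult_left_mono divide_right_mono) auto
      finally show "\<Delta> i \<le> real DIM('a) / real N" by simp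
    qed
    have \<rho>nn: "0 \<le> \<rho> i" if "i \<le> N" for i
      using tge[of i] s0 tle1[OF that] by (auto simp: \<rho>_def intro!: rf_nonneg)
    have \<rho>R: "\<rho> i \<le> R" if "i \<le> N" for i
      using rf_mono[of s0 "t i"] tge[of i] s0 tle1[OF that] Rrf by (simp add: \<rho>_def)
    have \<rho>mono: "\<rho> (Suc i) ^ n \<le> \<rho> i ^ n" if "i < N" for i
    proof -
      have "\<rho> (Suc i) \<le> \<rho> i"
        using rf_mono[of "t i" "t (Suc i)"] tge[of i] s0 tmono[of i] tle1[of "Suc i"] that by (simp add: \<rho>_def)
      then show ?thesis using \<rho>nn[of "Suc i"] that by (intro power_mono) auto
    qed
    have \<rho>0: "\<rho> 0 = R" using t0 Rrf by (simp add: \<rho>_def)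
    have \<rho>N: "\<rho> N = 0" using tN by (simp add: \<rho>_def rf_one)
    have Ysum: "Y2 = (\<Sum>i<N. measure lebesgue (Kt \<inter> strip c (t i) (t (Suc i))))"
      using strip_partition[where t=t, OF KtL tmono, of c N] by (simp add: Y2_def t0 tN)
    have Qsum: "Q2 = (\<Sum>i<N. measure lebesgue (Kh \<inter> strip c (t i) (t (Suc i))))"
      using strip_partition[where t=t, OF KhL tmono, of c N] by (simp add: Q2_def t0 tN)
    have Yi: "\<Delta> i * \<rho> (Suc i) ^ n * p \<le> R ^ n * measure lebesgue (Kt \<inter> strip c (t i) (t (Suc i)))"
      if "i < N" for i
    proof -
      have ti: "0 < t i" "t i \<le> t (Suc i)" "t (Suc i) \<le> 1"
        using tge[of i] s0 tmono[of i] tle1[of "Suc i"] that by auto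
      have a: "\<Delta> i * Pm c T (\<rho> (Suc i)) \<le> measure lebesgue (Kt \<inter> strip c (t i) (t (Suc i)))"
        using strip_meas_lower[OF c Ts Tm ti] by (simp add: \<Delta>_def \<rho>_def Kt_def)
      have b: "(\<rho> (Suc i) / R) ^ n * p \<le> Pm c T (\<rho> (Suc i))"
        using Pm_T_lower[OF c T st Tm dim \<rho>nn[of "Suc i"] \<rho>R[of "Suc i"] R0] that
        by (simp add: p_def n_def)
      have "\<Delta> i * \<rho> (Suc i) ^ n * p = R ^ n * (\<Delta> i * ((\<rho> (Suc i) / R) ^ n * p))"
        using R0 by (simp add: power_divide)
      also have "\<dots> \<le> R ^ n * (\<Delta> i * Pm c T (\<rho> (Suc i)))"
        using b \<Delta>b[OF that] R0 by (intro mult_left_mono) auto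
      also have "\<dots> \<le> R ^ n * measure lebesgue (Kt \<inter> strip c (t i) (t (Suc i)))"
        using a R0 by (intro mult_left_mono) auto
      finally show ?thesis .
    qed
    have Qi: "measure lebesgue (Kh \<inter> strip c (t i) (t (Suc i))) \<le> \<Delta> i * \<rho> i ^ n * C" if "i < N" for i
    proof -
      have ti: "0 < t i" "t i < 1" "t i \<le> t (Suc i)" "t (Suc i) \<le> 1"
        using tge[of i] s0 tmono[of i] tle1[of "Suc i"] tlt1[OF that] that by auto
      show ?thesis
        using strip_meas_upper[OF c Hs Hm ti] PH[OF \<rho>nn[of i]] that
        by (simp add: \<Delta>_def \<rho>_def Kh_def mult.assoc)
    qed
    have "p * Q2 \<le> (\<Sum>i<N. p * (\<Delta> i * \<rho> i ^ n * C))"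
      unfolding Qsum sum_distrib_left using Qi p0 by (intro sum_mono mult_left_mono) auto
    also have "\<dots> = C * (\<Sum>i<N. \<Delta> i * \<rho> (Suc i) ^ n * p) + p * C * (\<Sum>i<N. \<Delta> i * (\<rho> i ^ n - \<rho> (Suc i) ^ n))"
      by (simp add: sum_distrib_left algebra_simps sum.distrib[symmetric])
    also have "\<dots> \<le> C * (R ^ n * Y2) + p * C * (real DIM('a) / real N * (\<rho> 0 ^ n - \<rho> N ^ n))"
    proof (rule add_mono)
      show "C * (\<Sum>i<N. \<Delta> i * \<rho> (Suc i) ^ n * p) \<le> C * (R ^ n * Y2)"
        unfolding Ysum sum_distrib_left using Yi C0 by (intro mult_left_mono sum_mono) auto
      show "p * C * (\<Sum>i<N. \<Delta> i * (\<rho> i ^ n - \<rho> (Suc i) ^ n)) \<le> p * C * (real DIM('a) / real N * (\<rho> 0 ^ n - \<rho> N ^ n))"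
        using p0 C0 \<Delta>b \<rho>mono by (intro mult_left_mono telescope_bound) auto
    qed
    also have "\<dots> = Pm c H R * Y2 + (p * C * real DIM('a) * R ^ n) / real N"
      using n1 R0 by (simp add: \<rho>0 \<rho>N PH)
    finally show ?thesis .
  qed
  have "p * Q2 \<le> Pm c H R * Y2"
    by (rule eps_limit_nat[where K = "p * C * real DIM('a) * R ^ n"]) (use main in auto)
  then show ?thesis by (simp add: p_def Q2_def Y2_def Kt_def Kh_def H_def R_def s0_def)
qed


lemma strip_split:
  fixes E :: "'a::euclidean_space set"
  assumes E: "E \<in> lmeasurable" and ab: "a \<le> b" "b \<le> d"
  shows "measure lebesgue (E \<inter> strip c a d) = measure lebesgue (E \<inter> strip c a b) + measure lebesgue (E \<inter> strip c b d)"
proof -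
  have eq: "E \<inter> strip c a d = (E \<inter> strip c a b) \<union> (E \<inter> strip c b d)"
    using ab by (auto simp: strip_def)
  have f1: "E \<inter> strip c a b \<in> lmeasurable" using E strip_lebesgue by (rule fmeasurable_Int_fmeasurable)
  have f2: "E \<inter> strip c b d \<in> lmeasurable" using E strip_lebesgue by (rule fmeasurable_Int_fmeasurable)
  show ?thesis
    unfolding eq using f1 f2 by (intro measure_Union) (auto simp: fmeasurable_def strip_def)
qed

lemma K2:
  fixes c :: "'a::euclidean_space"
  assumes c: "norm c = 1" and T: "T \<subseteq> open_hemisphere c" and st: "sph_star_shaped c T"
    and Tm: "sphere_cone T \<in> sets lebesgue" and dim: "DIM('a) \<ge> 2" and r: "0 < r" "r < pi / 2"
  shows "Pm c (open_hemisphere c) (tan r) * measure lebesgue (sphere_cone T \<inter> strip c 0 (cos r))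
         \<le> Pm c T (tan r) * measure lebesgue (sphere_cone (open_hemisphere c) \<inter> strip c 0 (cos r))"
proof -
  define H where "H = open_hemisphere c"
  define s0 where "s0 = cos r"
  define R where "R = tan r"
  define n where "n = DIM('a) - 1"
  define C where "C = Pm c H 1"
  define p where "p = Pm c T R"
  define Kt where "Kt = sphere_cone T"
  define Kh where "Kh = sphere_cone H"
  define Y1 where "Y1 = measure lebesgue (Kt \<inter> strip c 0 s0)"
  define Q1 where "Q1 = measure lebesgue (Kh \<inter> strip c 0 s0)"
  define M where "M = measure lebesgue (Zc c)"
  note cf = cos_facts[OF r]
  have s0: "0 < s0" "s0 < 1" using cf by (auto simp: s0_def)
  have R0: "R > 0" and Rrf: "rf s0 = R" using cf by (auto simp: R_def s0_def)
  have n1: "n \<ge> 1" using dim by (simp add: n_def)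
  have Ts: "T \<subseteq> sphere 0 1" using T by (auto simp: open_hemisphere_def)
  have Hs: "H \<subseteq> sphere 0 1" by (auto simp: H_def open_hemisphere_def)
  have Hm: "sphere_cone H \<in> sets lebesgue" using sphere_cone_hemi(2)[OF c] by (simp add: H_def)
  have PH: "Pm c H \<rho> = \<rho> ^ n * C" if "\<rho> \<ge> 0" for \<rho>
    using Pm_H_formula[OF c dim that] by (simp add: H_def C_def n_def)
  have p0: "p \<ge> 0" and C0: "C \<ge> 0" by (auto simp: p_def C_def Pm_nonneg)
  have KtL: "Kt \<in> lmeasurable" using sphere_cone_lmeasurable[OF Ts Tm] by (simp add: Kt_def)
  have KhL: "Kh \<in> lmeasurable" using sphere_cone_lmeasurable[OF Hs Hm] by (simp add: Kh_def)
  have KtKh: "Kt \<subseteq> Kh"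
    using T sphere_cone_eq[OF Ts] sphere_cone_eq[OF Hs] by (auto simp: Kt_def Kh_def H_def cn_def)
  have main: "R ^ n * C * Y1 \<le> R ^ n * C * (\<delta> * M) + p * Q1 + (p * C * real DIM('a) * rf \<delta> ^ n) / real N"
    if d: "0 < \<delta>" "\<delta> < s0" and N1: "N \<ge> 1" for \<delta> and N :: nat
  proof -
    define t where "t i = \<delta> + real i * (s0 - \<delta>) / real N" for i :: nat
    have Npos: "real N > 0" using N1 by simp
    have step: "(s0 - \<delta>) / real N \<ge> 0" using d Npos by simp
    have tmono: "t i \<le> t (Suc i)" for i using step by (simp add: t_def distrib_right add_divide_distrib)
    have t0: "t 0 = \<delta>" by (simp add: t_def)
    have tN: "t N = s0" using Npos by (simp add: t_def)
    have tge: "t i \<ge> \<delta>" for i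
    proof -
      have "real i * (s0 - \<delta>) / real N \<ge> 0" using d Npos by (intro divide_nonneg_pos mult_nonneg_nonneg) auto
      then show ?thesis by (simp add: t_def)
    qed
    have tle: "t i \<le> s0" if "i \<le> N" for i
    proof -
      have "real i * (s0 - \<delta>) / real N \<le> real N * (s0 - \<delta>) / real N"
        using that d Npos by (intro divide_right_mono mult_right_mono) auto
      then show ?thesis using Npos by (simp add: t_def)
    qed
    have tdiff: "t (Suc i) - t i = (s0 - \<delta>) / real N" for i
      by (simp add: t_def distrib_right add_divide_distrib)
    define \<Delta> where "\<Delta> i = t (Suc i) ^ DIM('a) - t i ^ DIM('a)" for i
    define \<rho> where "\<rho> i = rf (t i)" for i
    have \<Delta>b: "0 \<le> \<Delta> i \<and> \<Delta> i \<le> real DIM('a) / real N" if "i < N" for i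
    proof
      have ti: "0 \<le> t i" "t i \<le> t (Suc i)" "t (Suc i) \<le> 1"
        using tge[of i] d tmono[of i] tle[of "Suc i"] s0 that by auto
      show "0 \<le> \<Delta> i" using ti by (simp add: \<Delta>_def power_mono)
      have "\<Delta> i \<le> real DIM('a) * (t (Suc i) - t i)" unfolding \<Delta>_def by (rule pow_diff_le[OF ti])
      also have "\<dots> = real DIM('a) * ((s0 - \<delta>) / real N)" by (simp add: tdiff)
      also have "\<dots> \<le> real DIM('a) * (1 / real N)"
        using s0 d Npos by (intro mult_left_mono divide_right_mono) auto
      finally show "\<Delta> i \<le> real DIM('a) / real N" by simp
    qed
    have \<rho>R: "R \<le> \<rho> i" if "i \<le> N" for i
      using rf_mono[of "t i" s0] tge[of i] d s0 tle[OF that] Rrf by (simp add: \<rho>_def)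
    have \<rho>nn: "0 \<le> \<rho> i" if "i \<le> N" for i using \<rho>R[OF that] R0 by simp
    have \<rho>mono: "\<rho> (Suc i) ^ n \<le> \<rho> i ^ n" if "i < N" for i
    proof -
      have "\<rho> (Suc i) \<le> \<rho> i"
        using rf_mono[of "t i" "t (Suc i)"] tge[of i] d tmono[of i] tle[of "Suc i"] s0 that by (simp add: \<rho>_def)
      then show ?thesis using \<rho>nn[of "Suc i"] that by (intro power_mono) auto
    qed
    have \<rho>0: "\<rho> 0 = rf \<delta>" using t0 by (simp add: \<rho>_def)
    have \<rho>N: "\<rho> N = R" using tN Rrf by (simp add: \<rho>_def)
    have Ysplit: "Y1 = measure lebesgue (Kt \<inter> strip c 0 \<delta>) + measure lebesgue (Kt \<inter> strip c \<delta> s0)"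
      unfolding Y1_def by (rule strip_split[OF KtL]) (use d in auto)
    have Qsplit: "Q1 = measure lebesgue (Kh \<inter> strip c 0 \<delta>) + measure lebesgue (Kh \<inter> strip c \<delta> s0)"
      unfolding Q1_def by (rule strip_split[OF KhL]) (use d in auto)
    have Ysum: "measure lebesgue (Kt \<inter> strip c \<delta> s0) = (\<Sum>i<N. measure lebesgue (Kt \<inter> strip c (t i) (t (Suc i))))"
      using strip_partition[where t=t, OF KtL tmono, of c N] by (simp add: t0 tN)
    have Qsum: "measure lebesgue (Kh \<inter> strip c \<delta> s0) = (\<Sum>i<N. measure lebesgue (Kh \<inter> strip c (t i) (t (Suc i))))"
      using strip_partition[where t=t, OF KhL tmono, of c N] by (simp add: t0 tN)
    have Y0: "measure lebesgue (Kt \<inter> strip c 0 \<delta>) \<le> \<delta> * M"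
    proof -
      have "measure lebesgue (Kt \<inter> strip c 0 \<delta>) \<le> measure lebesgue (Kh \<inter> strip c 0 \<delta>)"
        using KtKh fmeasurableD[OF fmeasurable_Int_fmeasurable[OF KtL strip_lebesgue[of c 0 \<delta>]]]
          fmeasurable_Int_fmeasurable[OF KhL strip_lebesgue[of c 0 \<delta>]]
        by (intro measure_mono_fmeasurable) auto
      also have "\<dots> \<le> \<delta> * M"
        using slab_bound[OF c d(1)] d s0 by (simp add: Kh_def H_def M_def)
      finally show ?thesis .
    qed
    have Q0: "measure lebesgue (Kh \<inter> strip c 0 \<delta>) \<ge> 0" by simp
    have Yi: "R ^ n * measure lebesgue (Kt \<inter> strip c (t i) (t (Suc i))) \<le> \<Delta> i * \<rho> i ^ n * p"
      if "i < N" for i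
    proof -
      have ti: "0 < t i" "t i < 1" "t i \<le> t (Suc i)" "t (Suc i) \<le> 1"
        using tge[of i] d tmono[of i] tle[of "Suc i"] tle[of i] s0 that by auto
      have a: "measure lebesgue (Kt \<inter> strip c (t i) (t (Suc i))) \<le> \<Delta> i * Pm c T (\<rho> i)"
        using strip_meas_upper[OF c Ts Tm ti] by (simp add: \<Delta>_def \<rho>_def Kt_def)
      have b: "R ^ n * Pm c T (\<rho> i) \<le> \<rho> i ^ n * p"
        using Pm_T_upper[OF c T st Tm dim R0 \<rho>R[of i]] that by (simp add: p_def n_def)
      have "R ^ n * measure lebesgue (Kt \<inter> strip c (t i) (t (Suc i))) \<le> R ^ n * (\<Delta> i * Pm c T (\<rho> i))"
        using a R0 by (intro mult_left_mono) auto
      also have "\<dots> = \<Delta> i * (R ^ n * Pm c T (\<rho> i))" by simp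
      also have "\<dots> \<le> \<Delta> i * (\<rho> i ^ n * p)"
        using b \<Delta>b[OF that] by (intro mult_left_mono) auto
      finally show ?thesis by (simp add: mult.assoc)
    qed
    have Qi: "\<Delta> i * \<rho> (Suc i) ^ n * C \<le> measure lebesgue (Kh \<inter> strip c (t i) (t (Suc i)))" if "i < N" for i
    proof -
      have ti: "0 < t i" "t i \<le> t (Suc i)" "t (Suc i) \<le> 1"
        using tge[of i] d tmono[of i] tle[of "Suc i"] s0 that by auto
      show ?thesis
        using strip_meas_lower[OF c Hs Hm ti] PH[OF \<rho>nn[of "Suc i"]] that
        by (simp add: \<Delta>_def \<rho>_def Kh_def mult.assoc)
    qed
    have "R ^ n * C * Y1 = R ^ n * C * measure lebesgue (Kt \<inter> strip c 0 \<delta>) + C * (\<Sum>i<N. R ^ n * measure lebesgue (Kt \<inter> strip c (t i) (t (Suc i))))"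
      unfolding Ysplit Ysum by (simp add: sum_distrib_left algebra_simps)
    also have "\<dots> \<le> R ^ n * C * (\<delta> * M) + C * (\<Sum>i<N. \<Delta> i * \<rho> i ^ n * p)"
    proof (rule add_mono)
      show "R ^ n * C * measure lebesgue (Kt \<inter> strip c 0 \<delta>) \<le> R ^ n * C * (\<delta> * M)"
        using Y0 R0 C0 by (intro mult_left_mono) auto
      show "C * (\<Sum>i<N. R ^ n * measure lebesgue (Kt \<inter> strip c (t i) (t (Suc i)))) \<le> C * (\<Sum>i<N. \<Delta> i * \<rho> i ^ n * p)"
        using Yi C0 by (intro mult_left_mono sum_mono) auto
    qed
    also have "C * (\<Sum>i<N. \<Delta> i * \<rho> i ^ n * p) = p * (\<Sum>i<N. \<Delta> i * \<rho> (Suc i) ^ n * C) + p * C * (\<Sum>i<N. \<Delta> i * (\<rho> i ^ n - \<rho> (Suc i) ^ n))"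
      by (simp add: sum_distrib_left algebra_simps sum.distrib[symmetric])
    also have "p * (\<Sum>i<N. \<Delta> i * \<rho> (Suc i) ^ n * C) \<le> p * Q1"
    proof -
      have "(\<Sum>i<N. \<Delta> i * \<rho> (Suc i) ^ n * C) \<le> measure lebesgue (Kh \<inter> strip c \<delta> s0)"
        unfolding Qsum using Qi by (intro sum_mono) auto
      also have "\<dots> \<le> Q1" using Qsplit by simp
      finally show ?thesis using p0 by (intro mult_left_mono) auto
    qed
    also have "p * C * (\<Sum>i<N. \<Delta> i * (\<rho> i ^ n - \<rho> (Suc i) ^ n)) \<le> p * C * (real DIM('a) / real N * (\<rho> 0 ^ n - \<rho> N ^ n))"
      using p0 C0 \<Delta>b \<rho>mono by (intro mult_left_mono telescope_bound) auto
    also have "\<dots> \<le> p * C * (real DIM('a) / real N * rf \<delta> ^ n)"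
    proof -
      have "\<rho> N ^ n \<ge> 0" using \<rho>nn[of N] by simp
      then have "\<rho> 0 ^ n - \<rho> N ^ n \<le> rf \<delta> ^ n" using \<rho>0 by simp
      then show ?thesis using p0 C0 Npos by (intro mult_left_mono) auto
    qed
    finally show ?thesis by (simp add: algebra_simps)
  qed
  have lim1: "R ^ n * C * Y1 \<le> R ^ n * C * (\<delta> * M) + p * Q1" if d: "0 < \<delta>" "\<delta> < s0" for \<delta>
    by (rule eps_limit_nat[where K = "p * C * real DIM('a) * rf \<delta> ^ n"]) (use main[OF d] in auto)
  have "R ^ n * C * Y1 \<le> p * Q1"
  proof (rule eps_limit_real[OF s0(1), where K = "R ^ n * C * M"])
    fix \<delta> :: real assume dd: "0 < \<delta>" "\<delta> < s0"
    have e: "R ^ n * C * (\<delta> * M) = \<delta> * (R ^ n * C * M)" by (simp add: mult_ac)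
    show "R ^ n * C * Y1 \<le> p * Q1 + \<delta> * (R ^ n * C * M)"
      using lim1[OF dd] e by linarith
  qed
  moreover have "Pm c H R = R ^ n * C" using PH R0 by simp
  ultimately show ?thesis by (simp add: p_def Q1_def Y1_def Kt_def Kh_def H_def R_def s0_def)
qed


lemma final_alg:
  fixes \<sigma> p q Y1 Y2 Q1 Q2 :: real
  assumes q: "q > 0" and nn: "\<sigma> \<ge> 0" "Q2 \<ge> 0"
    and k1: "p * Q2 \<le> q * Y2" and k2: "q * Y1 \<le> p * Q1" and pq: "\<sigma> * q \<le> Q1"
  shows "(\<sigma> * q + Q2) * (Y1 + Y2) \<le> (\<sigma> * p + Y2) * (Q1 + Q2)"
proof -
  have A: "0 \<le> \<sigma> * q * (p * Q1 - q * Y1)" using nn q k2 by (intro mult_nonneg_nonneg) auto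
  have B: "0 \<le> (q * Y2 - p * Q2) * (Q1 - \<sigma> * q)" using k1 pq by (intro mult_nonneg_nonneg) auto
  have Cc: "0 \<le> p * Q1 * Q2 - q * Q2 * Y1"
  proof -
    have "q * Y1 * Q2 \<le> p * Q1 * Q2" using k2 nn by (intro mult_right_mono) auto
    then show ?thesis by (simp add: mult_ac)
  qed
  have eq: "q * ((\<sigma> * p + Y2) * (Q1 + Q2) - (\<sigma> * q + Q2) * (Y1 + Y2))
      = \<sigma> * q * (p * Q1 - q * Y1) + (q * Y2 - p * Q2) * (Q1 - \<sigma> * q) + (p * Q1 * Q2 - q * Q2 * Y1)"
    by (simp add: algebra_simps)
  have "0 \<le> q * ((\<sigma> * p + Y2) * (Q1 + Q2) - (\<sigma> * q + Q2) * (Y1 + Y2))"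
    unfolding eq using A B Cc by linarith
  then have "0 \<le> (\<sigma> * p + Y2) * (Q1 + Q2) - (\<sigma> * q + Q2) * (Y1 + Y2)"
    using q by (simp add: zero_le_mult_iff)
  then show ?thesis by simp
qed

lemma sphere_cone_sub_strip:
  fixes c :: "'a::euclidean_space"
  assumes c: "norm c = 1" and A: "A \<subseteq> open_hemisphere c"
  shows "sphere_cone A \<subseteq> strip c 0 1"
proof
  fix y assume y: "y \<in> sphere_cone A"
  have As: "A \<subseteq> sphere 0 1" using A by (auto simp: open_hemisphere_def)
  have Hs: "open_hemisphere c \<subseteq> sphere 0 1" by (auto simp: open_hemisphere_def)
  have "sphere_cone A \<subseteq> sphere_cone (open_hemisphere c)"
    using A by (auto simp: sphere_cone_def)
  then have "y \<bullet> c > 0" "norm y \<le> 1" using y sphere_cone_hemi(1)[OF c] by auto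
  then show "y \<in> strip c 0 1" using inner_le_norm_c[OF c, of y] by (simp add: strip_def)
qed

lemma total_split:
  fixes c :: "'a::euclidean_space"
  assumes c: "norm c = 1" and A: "A \<subseteq> open_hemisphere c" and Am: "sphere_cone A \<in> sets lebesgue"
    and s: "0 \<le> s0" "s0 \<le> 1"
  shows "measure lebesgue (sphere_cone A) = measure lebesgue (sphere_cone A \<inter> strip c 0 s0) + measure lebesgue (sphere_cone A \<inter> strip c s0 1)"
proof -
  have As: "A \<subseteq> sphere 0 1" using A by (auto simp: open_hemisphere_def)
  have "sphere_cone A = sphere_cone A \<inter> strip c 0 1" using sphere_cone_sub_strip[OF c A] by auto
  then show ?thesis using strip_split[OF sphere_cone_lmeasurable[OF As Am] s, of c] by simp
qed


lemma region1_meas: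
  fixes c :: "'a::euclidean_space"
  assumes c: "norm c = 1" and A: "A \<subseteq> open_hemisphere c" and r: "0 < r" "r < pi / 2"
  shows "measure lebesgue (sphere_cone (A \<inter> sph_ball c r) \<inter> strip c 0 (cos r)) = cos r ^ DIM('a) * Pm c A (tan r)"
proof -
  have AB: "A \<inter> sph_ball c r \<subseteq> open_hemisphere c" using A by auto
  have "sphere_cone (A \<inter> sph_ball c r) \<inter> strip c 0 (cos r) = sphere_cone (A \<inter> sph_ball c r) \<inter> {y. y \<bullet> c \<le> cos r}"
    using sphere_cone_sub_strip[OF c AB] by (auto simp: strip_def)
  also have "\<dots> = pyr c A (tan r) \<inter> {y. y \<bullet> c \<le> cos r}" by (rule region1[OF c A r])
  finally show ?thesis
    using measure_pyr_le[of "cos r" c A "tan r"] cos_facts[OF r] by (simp add: Pm_def)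
qed

lemma region2_meas:
  fixes c :: "'a::euclidean_space"
  assumes c: "norm c = 1" and A: "A \<subseteq> open_hemisphere c" and r: "0 < r" "r < pi / 2"
  shows "sphere_cone (A \<inter> sph_ball c r) \<inter> strip c (cos r) 1 = sphere_cone A \<inter> strip c (cos r) 1"
proof -
  have "strip c (cos r) 1 = {y. y \<bullet> c > cos r} \<inter> {y. y \<bullet> c \<le> 1}" by (auto simp: strip_def)
  then show ?thesis using region2[OF c A, of r] r by (metis (no_types, lifting) Int_assoc less_imp_le)
qed

theorem mainTheorem11:
  fixes c :: "'a::euclidean_space" and r :: real and T :: "'a set"
  assumes "DIM('a) \<ge> 2"
    and "c \<in> sphere 0 1"
    and "0 < r" and "r \<le> pi / 2"
    and "T \<subseteq> open_hemisphere c"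
    and "sphere_measurable T"
    and "sph_star_shaped c T"
  shows "surf_measure (sph_ball c r \<inter> T) * surf_measure (open_hemisphere c)
           \<ge> surf_measure (sph_ball c r) * surf_measure T"
proof -
  note dim = assms(1) and T = assms(5) and st = assms(7)
  have c: "norm c = 1" using assms(2) by simp
  have Tm: "sphere_cone T \<in> sets lebesgue" using assms(6) by (simp add: sphere_measurable_def)
  define H where "H = open_hemisphere c"
  have BH: "sph_ball c r \<subseteq> H" using ball_sub_hemi[OF c] assms(3,4) by (simp add: H_def)
  show ?thesis
  proof (cases "r = pi / 2")
    case True
    have "H \<subseteq> sph_ball c r"
    proof
      fix x assume x: "x \<in> H"
      then have nx: "norm x = 1" and xc: "x \<bullet> c > 0" by (auto simp: H_def open_hemisphere_def)
      have "\<bar>x \<bullet> c\<bar> \<le> 1" using Cauchy_Schwarz_ineq2[of x c] nx c by simp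
      then have "arccos (x \<bullet> c) < pi / 2" using arccos_less_iff[of "x \<bullet> c" "pi / 2"] xc by auto
      then show "x \<in> sph_ball c r" using nx True by (simp add: sph_ball_def)
    qed
    then have e: "sph_ball c r = H" using BH by auto
    have "sph_ball c r \<inter> T = T" using e T by (auto simp: H_def)
    then show ?thesis using e by (simp add: H_def mult.commute)
  next
    case False
    then have r: "0 < r" "r < pi / 2" using assms(3,4) by auto
    note cf = cos_facts[OF r]
    have Hs: "H \<subseteq> open_hemisphere c" by (simp add: H_def)
    have Hm: "sphere_cone H \<in> sets lebesgue" using sphere_cone_hemi(2)[OF c] by (simp add: H_def)
    have Ts: "T \<subseteq> sphere 0 1" using T by (auto simp: open_hemisphere_def)
    have Hsp: "H \<subseteq> sphere 0 1" by (auto simp: H_def open_hemisphere_def)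
    have eB: "sph_ball c r = H \<inter> sph_ball c r" using BH by auto
    have eTB: "sph_ball c r \<inter> T = T \<inter> sph_ball c r" by auto
    have TBH: "T \<inter> sph_ball c r \<subseteq> open_hemisphere c" using T by auto
    have HBH: "H \<inter> sph_ball c r \<subseteq> open_hemisphere c" using BH by (auto simp: H_def)
    have TBm: "sphere_cone (T \<inter> sph_ball c r) \<in> sets lebesgue"
      using sphere_cone_ball_meas[OF c Ts Tm, of r] r by simp
    have HBm: "sphere_cone (H \<inter> sph_ball c r) \<in> sets lebesgue"
      using sphere_cone_ball_meas[OF c Hsp Hm, of r] r by simp
    define s0 where "s0 = cos r"
    define R where "R = tan r"
    define p where "p = Pm c T R"
    define q where "q = Pm c H R"
    define \<sigma> where "\<sigma> = s0 ^ DIM('a)"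
    define Y1 where "Y1 = measure lebesgue (sphere_cone T \<inter> strip c 0 s0)"
    define Y2 where "Y2 = measure lebesgue (sphere_cone T \<inter> strip c s0 1)"
    define Q1 where "Q1 = measure lebesgue (sphere_cone H \<inter> strip c 0 s0)"
    define Q2 where "Q2 = measure lebesgue (sphere_cone H \<inter> strip c s0 1)"
    have s0: "0 \<le> s0" "s0 \<le> 1" using cf by (auto simp: s0_def)
    have mT: "measure lebesgue (sphere_cone T) = Y1 + Y2"
      using total_split[OF c T Tm s0] by (simp add: Y1_def Y2_def)
    have mH: "measure lebesgue (sphere_cone H) = Q1 + Q2"
      using total_split[OF c Hs Hm s0] by (simp add: Q1_def Q2_def)
    have mTB: "measure lebesgue (sphere_cone (sph_ball c r \<inter> T)) = \<sigma> * p + Y2"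
    proof -
      have "measure lebesgue (sphere_cone (T \<inter> sph_ball c r)) = measure lebesgue (sphere_cone (T \<inter> sph_ball c r) \<inter> strip c 0 s0) + measure lebesgue (sphere_cone (T \<inter> sph_ball c r) \<inter> strip c s0 1)"
        by (rule total_split[OF c TBH TBm s0])
      also have "\<dots> = \<sigma> * p + Y2"
        using region1_meas[OF c T r] region2_meas[OF c T r] by (simp add: \<sigma>_def p_def Y2_def s0_def R_def)
      finally show ?thesis using eTB by simp
    qed
    have mB: "measure lebesgue (sphere_cone (sph_ball c r)) = \<sigma> * q + Q2"
    proof -
      have "measure lebesgue (sphere_cone (H \<inter> sph_ball c r)) = measure lebesgue (sphere_cone (H \<inter> sph_ball c r) \<inter> strip c 0 s0) + measure lebesgue (sphere_cone (H \<inter> sph_ball c r) \<inter> strip c s0 1)"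
        by (rule total_split[OF c HBH HBm s0])
      also have "\<dots> = \<sigma> * q + Q2"
        using region1_meas[OF c Hs r] region2_meas[OF c Hs r] by (simp add: \<sigma>_def q_def Q2_def s0_def R_def)
      finally show ?thesis using eB by simp
    qed
    have q0: "q > 0"
    proof -
      have "q = R ^ (DIM('a) - 1) * Pm c H 1"
        using Pm_H_formula[OF c dim, of R] cf by (simp add: q_def H_def R_def)
      then show ?thesis using Pm_H_pos[OF c] cf by (simp add: H_def R_def)
    qed
    have k1: "p * Q2 \<le> q * Y2"
      using K1[OF c T st Tm dim r] by (simp add: p_def q_def Q2_def Y2_def H_def R_def s0_def)
    have k2: "q * Y1 \<le> p * Q1"
      using K2[OF c T st Tm dim r] by (simp add: p_def q_def Q1_def Y1_def H_def R_def s0_def)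
    have pq: "\<sigma> * q \<le> Q1"
    proof -
      have "\<sigma> * q = measure lebesgue (sphere_cone (H \<inter> sph_ball c r) \<inter> strip c 0 s0)"
        using region1_meas[OF c Hs r] by (simp add: \<sigma>_def q_def s0_def R_def)
      also have "\<dots> \<le> Q1"
        unfolding Q1_def
        using sets.Int[OF HBm strip_lebesgue[of c 0 s0]]
          fmeasurable_Int_fmeasurable[OF sphere_cone_lmeasurable[OF Hsp Hm] strip_lebesgue[of c 0 s0]]
        by (intro measure_mono_fmeasurable) (auto simp: sphere_cone_def)
      finally show ?thesis .
    qed
    have nn: "\<sigma> \<ge> 0" "Q2 \<ge> 0" using s0 by (auto simp: \<sigma>_def Q2_def)
    have ineq: "(\<sigma> * q + Q2) * (Y1 + Y2) \<le> (\<sigma> * p + Y2) * (Q1 + Q2)"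
      by (rule final_alg[OF q0 nn k1 k2 pq])
    have d0: "real DIM('a) * real DIM('a) \<ge> 0" by simp
    show ?thesis
      unfolding surf_measure_def
      using mult_left_mono[OF ineq d0] mT mH mTB mB
      by (simp add: H_def mult_ac)
  qed
qed


end
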